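(* Consider an $n$-player team problem with common cost $c$ satisfying Assumptions A1, A4, A5 and A7. Let $\{\mu_m\}$ and $\mu$ be information structures satisfying Assumption A3 with $\mu_m\to\mu$ weakly, and assume in addition that either (a) all $\mu_m$ and $\mu$ have the same $\mathbb{X}$-marginal (fixed prior), or (b) $c$ is continuous and bounded (Assumption A2). Then the team value function is upper semicontinuous along this sequence: $$\limsup_{m\to\infty}J^*(c,\mu_m)\le J^*(c,\mu).$$
   Context: $\mathbb{X},\mathbb{Y}^1,\dots,\mathbb{Y}^n$ are standard Borel spaces. An information structure is a probability measure $\mu$ on $\mathbb{X}\times\mathbb{Y}^1\times\cdots\times\mathbb{Y}^n$; its $\mathbb{X}$-marginal $\zeta$ is the prior. A team problem consists of standard Borel action spaces $\mathbb{U}^i$ and a common measurable cost $c:\mathbb{X}\times\mathbb{U}^1\times\cdots\times\mathbb{U}^n\to\mathbb{R}$; for a team policy $\bar\gamma=(\gamma^1,\dots,\gamma^n)$ with measurable $\gamma^i:\mathbb{Y}^i\to\mathbb{U}^i$, $J(c,\mu,\bar\gamma)=\int c(x,\gamma^1(y^1),\dots,\gamma^n(y^n))\,d\mu$, and $J^*(c,\mu)=\inf_{\bar\gamma}J(c,\mu,\bar\gamma)$. Weak convergence: $\int f d\mu_m\to\int f d\mu$ for every bounded continuous $f$. Assumptions: A1: the cost is measurable and bounded. A2: the cost is continuous and bounded. A3: $\mu\ll\zeta(dx)\bar Q^1(dy^1)\cdots\bar Q^n(dy^n)$ for some probability measures $\bar Q^i$ on $\mathbb{Y}^i$. A4: each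 action space is compact. A5: the bounded measurable cost is continuous in the players' actions for each fixed $x$, and each action space is compact. A7: each action space is a convex subset of $\mathbb{R}^k$ for some $k$. *)

theory Defs
  imports "HOL-Probability.Probability"
begin

text \<open>
  Players are indexed by a finite type 'i. The state space is a Polish type 'x,
  observation spaces are (closed subsets of) a common Polish type 'y, so the joint
  observation is a function 'i => 'y.  Action spaces are subsets U i of a common
  Euclidean space 'u.
\<close>

definition info_structure :: "('x::topological_space \<times> 'y::topological_space) measure \<Rightarrow> bool" where
  "info_structure \<mu> \<longleftrightarrow> prob_space \<mu> \<and> sets \<mu> = sets borel"

definition prior :: "('x::topological_space \<times> 'y::topological_space) measure \<Rightarrow> 'x measure" where
  "prior \<mu> = distr \<mu> borel fst"

definition team_policies ::
  "('i \<Rightarrow> 'u::topological_space set) \<Rightarrow> ('i \<Rightarrow> 'y::topological_space \<Rightarrow> 'u) set" where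
  "team_policies U = {\<gamma>. \<forall>i. \<gamma> i \<in> borel_measurable borel \<and> (\<forall>y. \<gamma> i y \<in> U i)}"

definition team_cost ::
  "('x \<times> ('i \<Rightarrow> 'u) \<Rightarrow> real) \<Rightarrow> ('x \<times> ('i \<Rightarrow> 'y)) measure \<Rightarrow> ('i \<Rightarrow> 'y \<Rightarrow> 'u) \<Rightarrow> real" where
  "team_cost c \<mu> \<gamma> = (\<integral>z. c (fst z, \<lambda>i. \<gamma> i (snd z i)) \<partial>\<mu>)"

definition team_value ::
  "('i \<Rightarrow> 'u::topological_space set) \<Rightarrow> ('x \<times> ('i \<Rightarrow> 'u) \<Rightarrow> real) \<Rightarrow>
   ('x \<times> ('i \<Rightarrow> 'y::topological_space)) measure \<Rightarrow> real" where
  "team_value U c \<mu> = (INF \<gamma>\<in>team_policies U. team_cost c \<mu> \<gamma>)"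

definition assumption_A3 :: "('x::topological_space \<times> ('i \<Rightarrow> 'y::topological_space)) measure \<Rightarrow> bool" where
  "assumption_A3 \<mu> \<longleftrightarrow> (\<exists>Q :: 'i \<Rightarrow> 'y measure.
     (\<forall>i. prob_space (Q i) \<and> sets (Q i) = sets borel) \<and>
     absolutely_continuous (prior \<mu> \<Otimes>\<^sub>M (\<Pi>\<^sub>M i\<in>UNIV. Q i)) \<mu>)"

definition weak_conv_seq :: "(nat \<Rightarrow> 'a::topological_space measure) \<Rightarrow> 'a measure \<Rightarrow> bool" where
  "weak_conv_seq \<mu>s \<mu> \<longleftrightarrow> (\<forall>f :: 'a \<Rightarrow> real. continuous_on UNIV f \<and> bounded (range f) \<longrightarrow>
      (\<lambda>m. \<integral>z. f z \<partial>\<mu>s m) \<longlonglongrightarrow> (\<integral>z. f z \<partial>\<mu>))"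

end

theory Submission
  imports Defs
begin


lemma urysohn_KV:
  fixes K V :: "'a::metric_space set"
  assumes K: "compact K" and V: "open V" and KV: "K \<subseteq> V"
  obtains \<phi> :: "'a \<Rightarrow> real" where "continuous_on UNIV \<phi>" "\<And>x. 0 \<le> \<phi> x \<and> \<phi> x \<le> 1"
    "\<And>x. x \<in> K \<Longrightarrow> \<phi> x = 1" "\<And>x. x \<notin> V \<Longrightarrow> \<phi> x = 0"
proof (cases "K = {}")
  case True
  show ?thesis by (rule that[of "\<lambda>_. 0"]) (use True in auto)
next
  case Kne: False
  show ?thesis
  proof (cases "- V = {}")
    case True
    show ?thesis by (rule that[of "\<lambda>_. 1"]) (use True in auto)
  next
    case One: False
    have cK: "closed K" using K compact_imp_closed by blast
    have cO: "closed (- V)" using V by auto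
    have pos: "infdist x (- V) + infdist x K > 0" for x
    proof -
      have "\<not> (infdist x (- V) = 0 \<and> infdist x K = 0)"
      proof
        assume h: "infdist x (- V) = 0 \<and> infdist x K = 0"
        then have "x \<in> closure (- V)" "x \<in> closure K"
          using in_closure_iff_infdist_zero[OF One] in_closure_iff_infdist_zero[OF Kne] by auto
        then have "x \<in> - V" "x \<in> K" using cK cO by (auto simp: closure_closed)
        then show False using KV by auto
      qed
      then show ?thesis using infdist_nonneg[of x "-V"] infdist_nonneg[of x K] by linarith
    qed
    define \<phi> where "\<phi> x = infdist x (- V) / (infdist x (- V) + infdist x K)" for x
    show ?thesis
    proof (rule that[of \<phi>])
      show "continuous_on UNIV \<phi>" unfolding \<phi>_def
        using pos by (intro continuous_intros) (auto simp: less_le)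
      fix x
      show "0 \<le> \<phi> x \<and> \<phi> x \<le> 1" unfolding \<phi>_def using pos[of x] infdist_nonneg[of x K] infdist_nonneg[of x "-V"]
        by (auto simp: divide_simps)
      show "x \<in> K \<Longrightarrow> \<phi> x = 1" unfolding \<phi>_def using pos[of x] by auto
      show "x \<notin> V \<Longrightarrow> \<phi> x = 0" unfolding \<phi>_def using pos[of x] by auto
    qed
  qed
qed

lemma indicator_approx:
  fixes M :: "'a::polish_space measure" and e :: real
  assumes fm: "finite_measure M" and sM: "sets M = sets borel" and A: "A \<in> sets borel" and e: "e > 0"
  shows "\<exists>\<phi>. continuous_on UNIV \<phi> \<and> (\<forall>x. 0 \<le> \<phi> x \<and> \<phi> x \<le> 1) \<and> (\<integral>x. \<bar>indicator A x - \<phi> x\<bar> \<partial>M) < e"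
proof -
  interpret finite_measure M by (rule fm)
  have fin: "emeasure M (space M) \<noteq> \<infinity>" by simp
  have AM: "A \<in> sets M" using A sM by simp
  have inner: "emeasure M A = (SUP K\<in>{K. K \<subseteq> A \<and> compact K}. emeasure M K)"
    by (rule inner_regular[OF sM fin A])
  have outer: "emeasure M A = (INF U\<in>{U. A \<subseteq> U \<and> open U}. emeasure M U)"
    by (rule outer_regular[OF sM fin A])
  obtain K where K: "K \<subseteq> A" "compact K" "measure M A < measure M K + e/3"
  proof (cases "measure M A < e/3")
    case True
    show ?thesis by (rule that[of "{}"]) (use True in auto)
  next
    case False
    have "ennreal (measure M A - e/3) < emeasure M A"
      using False e by (simp add: emeasure_eq_measure ennreal_less_iff)
    then obtain K where "K \<in> {K. K \<subseteq> A \<and> compact K}" "ennreal (measure M A - e/3) < emeasure M K"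
      unfolding inner by (auto simp: less_SUP_iff)
    moreover have "K \<in> sets M" using \<open>K \<in> {K. K \<subseteq> A \<and> compact K}\<close> sM
      by (auto intro: borel_closed compact_imp_closed)
    ultimately show ?thesis using False e
      by (intro that[of K]) (auto simp: emeasure_eq_measure ennreal_less_iff)
  qed
  obtain V where V: "A \<subseteq> V" "open V" "measure M V < measure M A + e/3"
  proof -
    have "emeasure M A < ennreal (measure M A + e/3)"
      using e by (simp add: emeasure_eq_measure ennreal_less_iff)
    then obtain V where "V \<in> {U. A \<subseteq> U \<and> open U}" "emeasure M V < ennreal (measure M A + e/3)"
      unfolding outer by (auto simp: INF_less_iff)
    moreover have "V \<in> sets M" using \<open>V \<in> {U. A \<subseteq> U \<and> open U}\<close> sM by auto
    ultimately show ?thesis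
      by (intro that[of V]) (auto simp: emeasure_eq_measure ennreal_less_iff)
  qed
  have KM: "K \<in> sets M" "V \<in> sets M" using K V sM by (auto intro: borel_closed compact_imp_closed)
  have KV': "K \<subseteq> V" using K(1) V(1) by (rule subset_trans)
  have "\<exists>\<phi>::'a \<Rightarrow> real. continuous_on UNIV \<phi> \<and> (\<forall>x. 0 \<le> \<phi> x \<and> \<phi> x \<le> 1) \<and>
    (\<forall>x. x \<in> K \<longrightarrow> \<phi> x = 1) \<and> (\<forall>x. x \<notin> V \<longrightarrow> \<phi> x = 0)"
    by (rule urysohn_KV[OF K(2) V(2) KV']) blast
  then obtain \<phi> :: "'a \<Rightarrow> real" where phi: "continuous_on UNIV \<phi>" "\<And>x. 0 \<le> \<phi> x \<and> \<phi> x \<le> 1"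
    "\<And>x. x \<in> K \<Longrightarrow> \<phi> x = 1" "\<And>x. x \<notin> V \<Longrightarrow> \<phi> x = 0"
    by blast
  have phim: "\<phi> \<in> borel_measurable M"
    using borel_measurable_continuous_onI[OF phi(1)] measurable_cong_sets[OF sM refl] by blast
  have pw: "\<bar>indicator A x - \<phi> x\<bar> \<le> indicator (V - K) x" for x
    using phi(2)[of x] phi(3)[of x] phi(4)[of x] K(1) V(1) by (auto simp: indicator_def)
  have int1: "integrable M (\<lambda>x. \<bar>indicator A x - \<phi> x\<bar>)"
  proof (rule integrable_const_bound[where B=2])
    show "AE x in M. norm \<bar>indicator A x - \<phi> x\<bar> \<le> 2"
      using pw by (intro AE_I2) (smt (verit) indicator_le_1 real_norm_def)
    show "(\<lambda>x. \<bar>indicator A x - \<phi> x\<bar>) \<in> borel_measurable M"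
      using AM phim by (intro borel_measurable_abs borel_measurable_diff borel_measurable_indicator)
  qed
  have "(\<integral>x. \<bar>indicator A x - \<phi> x\<bar> \<partial>M) \<le> (\<integral>x. indicator (V - K) x \<partial>M)"
    by (rule integral_mono[OF int1 _ pw]) (rule integrable_real_indicator; use KM in \<open>auto simp: top.not_eq_extremum[symmetric]\<close>)
  also have "\<dots> = measure M (V - K)" using KM by simp
  also have "\<dots> = measure M V - measure M K"
    using KM K(1) V(1) by (intro finite_measure_Diff) auto
  also have "\<dots> < e" using K(3) V(3) e by linarith
  finally show ?thesis using phi by blast
qed



definition approxC :: "'a::topological_space measure \<Rightarrow> ('a \<Rightarrow> real) \<Rightarrow> bool" where
  "approxC M a \<longleftrightarrow> a \<in> borel_measurable borel \<and> (\<exists>K. \<forall>x. \<bar>a x\<bar> \<le> K) \<and>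
     (\<forall>e>0. \<exists>\<phi> K. continuous_on UNIV \<phi> \<and> (\<forall>x. \<bar>\<phi> x\<bar> \<le> K) \<and> (\<integral>x. \<bar>a x - \<phi> x\<bar> \<partial>M) < e)"

context
  fixes M :: "'a::polish_space measure"
  assumes fm: "finite_measure M" and sM: "sets M = sets borel"
begin

lemma meas_M: "f \<in> borel_measurable borel \<Longrightarrow> f \<in> borel_measurable M"
  using measurable_cong_sets[OF sM refl] by blast

lemma intb: 
  fixes f :: "'a \<Rightarrow> real"
  assumes "f \<in> borel_measurable borel" "\<And>x. \<bar>f x\<bar> \<le> K" shows "integrable M f"
proof -
  interpret finite_measure M by (rule fm)
  show ?thesis by (rule integrable_const_bound[where B=K]) (use assms meas_M in auto)
qed

lemma cont_meas: "continuous_on UNIV (f::'a \<Rightarrow> real) \<Longrightarrow> f \<in> borel_measurable borel"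
  by (rule borel_measurable_continuous_onI)

lemma approxC_add:
  assumes a: "approxC M a" and b: "approxC M b"
  shows "approxC M (\<lambda>x. a x + b x)"
  unfolding approxC_def
proof (intro conjI allI impI)
  obtain Ka Kb where Ka: "\<forall>x. \<bar>a x\<bar> \<le> Ka" and Kb: "\<forall>x. \<bar>b x\<bar> \<le> Kb" using a b unfolding approxC_def by blast
  have am: "a \<in> borel_measurable borel" and bm: "b \<in> borel_measurable borel" using a b unfolding approxC_def by auto
  show "(\<lambda>x. a x + b x) \<in> borel_measurable borel" using am bm by measurable
  show "\<exists>K. \<forall>x. \<bar>a x + b x\<bar> \<le> K" using Ka Kb by (intro exI[of _ "Ka + Kb"]) (metis abs_triangle_ineq add_mono order_trans)
  fix e :: real assume e: "e > 0"
  obtain \<phi> K1 where p: "continuous_on UNIV \<phi>" "\<forall>x. \<bar>\<phi> x\<bar> \<le> K1" "(\<integral>x. \<bar>a x - \<phi> x\<bar> \<partial>M) < e/2"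
    using a e unfolding approxC_def by (meson half_gt_zero)
  obtain \<psi> K2 where q: "continuous_on UNIV \<psi>" "\<forall>x. \<bar>\<psi> x\<bar> \<le> K2" "(\<integral>x. \<bar>b x - \<psi> x\<bar> \<partial>M) < e/2"
    using b e unfolding approxC_def by (meson half_gt_zero)
  have pm: "\<phi> \<in> borel_measurable borel" "\<psi> \<in> borel_measurable borel" using p(1) q(1) cont_meas by auto
  have i1: "integrable M (\<lambda>x. \<bar>a x - \<phi> x\<bar>)"
  proof (rule intb[where K="Ka+K1"])
    show "(\<lambda>x. \<bar>a x - \<phi> x\<bar>) \<in> borel_measurable borel" using am pm by measurable
    fix x show "\<bar>\<bar>a x - \<phi> x\<bar>\<bar> \<le> Ka + K1" using Ka[rule_format, of x] p(2)[rule_format, of x] by (smt (verit))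
  qed
  have i2: "integrable M (\<lambda>x. \<bar>b x - \<psi> x\<bar>)"
  proof (rule intb[where K="Kb+K2"])
    show "(\<lambda>x. \<bar>b x - \<psi> x\<bar>) \<in> borel_measurable borel" using bm pm by measurable
    fix x show "\<bar>\<bar>b x - \<psi> x\<bar>\<bar> \<le> Kb + K2" using Kb[rule_format, of x] q(2)[rule_format, of x] by (smt (verit))
  qed
  have i3: "integrable M (\<lambda>x. \<bar>a x + b x - (\<phi> x + \<psi> x)\<bar>)"
  proof (rule intb[where K="Ka+K1+Kb+K2"])
    show "(\<lambda>x. \<bar>a x + b x - (\<phi> x + \<psi> x)\<bar>) \<in> borel_measurable borel" using am bm pm by measurable
    fix x show "\<bar>\<bar>a x + b x - (\<phi> x + \<psi> x)\<bar>\<bar> \<le> Ka+K1+Kb+K2"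
      using Ka[rule_format, of x] p(2)[rule_format, of x] Kb[rule_format, of x] q(2)[rule_format, of x] by (smt (verit))
  qed
  have "(\<integral>x. \<bar>a x + b x - (\<phi> x + \<psi> x)\<bar> \<partial>M) \<le> (\<integral>x. \<bar>a x - \<phi> x\<bar> + \<bar>b x - \<psi> x\<bar> \<partial>M)"
    by (rule integral_mono[OF i3 Bochner_Integration.integrable_add[OF i1 i2]]) linarith
  also have "\<dots> = (\<integral>x. \<bar>a x - \<phi> x\<bar> \<partial>M) + (\<integral>x. \<bar>b x - \<psi> x\<bar> \<partial>M)"
    by (rule Bochner_Integration.integral_add[OF i1 i2])
  also have "\<dots> < e" using p(3) q(3) by linarith
  finally show "\<exists>\<phi> K. continuous_on UNIV \<phi> \<and> (\<forall>x. \<bar>\<phi> x\<bar> \<le> K) \<and> (\<integral>x. \<bar>a x + b x - \<phi> x\<bar> \<partial>M) < e"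
    using p(1,2) q(1,2)
    by (intro exI[of _ "\<lambda>x. \<phi> x + \<psi> x"] exI[of _ "K1+K2"] conjI continuous_on_add) (auto intro: abs_triangle_ineq[THEN order_trans] add_mono)
qed

lemma approxC_scale:
  assumes a: "approxC M a"
  shows "approxC M (\<lambda>x. r * a x)"
  unfolding approxC_def
proof (intro conjI allI impI)
  obtain Ka where Ka: "\<forall>x. \<bar>a x\<bar> \<le> Ka" using a unfolding approxC_def by blast
  have am: "a \<in> borel_measurable borel" using a unfolding approxC_def by auto
  show "(\<lambda>x. r * a x) \<in> borel_measurable borel" using am by measurable
  show "\<exists>K. \<forall>x. \<bar>r * a x\<bar> \<le> K" using Ka
    by (intro exI[of _ "\<bar>r\<bar> * Ka"]) (simp add: abs_mult mult_left_mono)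
  fix e :: real assume e: "e > 0"
  have e': "e / (\<bar>r\<bar> + 1) > 0" using e by simp
  obtain \<phi> K1 where p: "continuous_on UNIV \<phi>" "\<forall>x. \<bar>\<phi> x\<bar> \<le> K1" "(\<integral>x. \<bar>a x - \<phi> x\<bar> \<partial>M) < e / (\<bar>r\<bar> + 1)"
    using a e' unfolding approxC_def by blast
  have pm: "\<phi> \<in> borel_measurable borel" using p(1) cont_meas by auto
  have "(\<integral>x. \<bar>r * a x - r * \<phi> x\<bar> \<partial>M) = (\<integral>x. \<bar>r\<bar> * \<bar>a x - \<phi> x\<bar> \<partial>M)"
    by (simp add: abs_mult right_diff_distrib[symmetric])
  also have "\<dots> = \<bar>r\<bar> * (\<integral>x. \<bar>a x - \<phi> x\<bar> \<partial>M)" by simp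
  also have "\<dots> \<le> \<bar>r\<bar> * (e / (\<bar>r\<bar> + 1))" using p(3) by (intro mult_left_mono) auto
  also have "\<dots> < e" using e by (simp add: field_simps)
  finally show "\<exists>\<phi> K. continuous_on UNIV \<phi> \<and> (\<forall>x. \<bar>\<phi> x\<bar> \<le> K) \<and> (\<integral>x. \<bar>r * a x - \<phi> x\<bar> \<partial>M) < e"
    using p(1,2)
    by (intro exI[of _ "\<lambda>x. r * \<phi> x"] exI[of _ "\<bar>r\<bar> * K1"] conjI continuous_on_mult continuous_on_const)
       (auto simp: abs_mult intro: mult_left_mono)
qed

lemma approxC_zero: "approxC M (\<lambda>x. 0)"
  unfolding approxC_def
  by (intro conjI allI impI exI[of _ "\<lambda>x. 0"] exI[of _ 0]) auto

lemma approxC_sum: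
  assumes "finite S" "\<And>k. k \<in> S \<Longrightarrow> approxC M (f k)"
  shows "approxC M (\<lambda>x. \<Sum>k\<in>S. f k x)"
  using assms
proof (induction S rule: finite_induct)
  case empty
  then show ?case using approxC_zero by simp
next
  case (insert k S)
  then show ?case using approxC_add[of "f k" "\<lambda>x. \<Sum>k\<in>S. f k x"] by simp
qed

lemma approxC_indicator:
  assumes A: "A \<in> sets borel" shows "approxC M (indicator A)"
  unfolding approxC_def
proof (intro conjI allI impI)
  show "indicator A \<in> borel_measurable borel" using A by simp
  show "\<exists>K. \<forall>x. \<bar>indicator A x :: real\<bar> \<le> K" by (intro exI[of _ 1]) (simp add: indicator_def)
  fix e :: real assume e: "e > 0"
  from indicator_approx[OF fm sM A e] obtain \<phi> where
    "continuous_on UNIV \<phi>" "\<forall>x. 0 \<le> \<phi> x \<and> \<phi> x \<le> 1" "(\<integral>x. \<bar>indicator A x - \<phi> x\<bar> \<partial>M) < e"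
    by blast
  then show "\<exists>\<phi> K. continuous_on UNIV \<phi> \<and> (\<forall>x. \<bar>\<phi> x\<bar> \<le> K) \<and> (\<integral>x. \<bar>indicator A x - \<phi> x\<bar> \<partial>M) < e"
    by (intro exI[of _ \<phi>] exI[of _ 1]) auto
qed

lemma approxC_unif:
  assumes am: "a \<in> borel_measurable borel" and Ka: "\<And>x. \<bar>a x\<bar> \<le> Ka"
    and un: "\<And>d. d > 0 \<Longrightarrow> \<exists>b. approxC M b \<and> (\<forall>x. \<bar>a x - b x\<bar> \<le> d)"
  shows "approxC M a"
  unfolding approxC_def
proof (intro conjI allI impI)
  interpret finite_measure M by (rule fm)
  show "a \<in> borel_measurable borel" by (rule am)
  show "\<exists>K. \<forall>x. \<bar>a x\<bar> \<le> K" using Ka by blast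
  fix e :: real assume e: "e > 0"
  define d where "d = e / (2 * (measure M (space M) + 1))"
  have mn: "0 \<le> measure M (space M)" by (rule measure_nonneg)
  have d: "d > 0" unfolding d_def using e mn by (smt (verit) divide_pos_pos)
  obtain b where b: "approxC M b" "\<forall>x. \<bar>a x - b x\<bar> \<le> d" using un[OF d] by blast
  obtain Kb where Kb: "\<forall>x. \<bar>b x\<bar> \<le> Kb" using b unfolding approxC_def by blast
  have bm: "b \<in> borel_measurable borel" using b unfolding approxC_def by auto
  obtain \<phi> K1 where p: "continuous_on UNIV \<phi>" "\<forall>x. \<bar>\<phi> x\<bar> \<le> K1" "(\<integral>x. \<bar>b x - \<phi> x\<bar> \<partial>M) < e/2"
    using b(1) e unfolding approxC_def by (meson half_gt_zero)
  have pm: "\<phi> \<in> borel_measurable borel" using p(1) cont_meas by auto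
  have i1: "integrable M (\<lambda>x. \<bar>a x - b x\<bar>)"
  proof (rule intb[where K="d"])
    show "(\<lambda>x. \<bar>a x - b x\<bar>) \<in> borel_measurable borel" using am bm by measurable
    fix x show "\<bar>\<bar>a x - b x\<bar>\<bar> \<le> d" using b(2) by simp
  qed
  have i2: "integrable M (\<lambda>x. \<bar>b x - \<phi> x\<bar>)"
  proof (rule intb[where K="Kb+K1"])
    show "(\<lambda>x. \<bar>b x - \<phi> x\<bar>) \<in> borel_measurable borel" using bm pm by measurable
    fix x show "\<bar>\<bar>b x - \<phi> x\<bar>\<bar> \<le> Kb + K1" using Kb[rule_format, of x] p(2)[rule_format, of x] by (smt (verit))
  qed
  have i3: "integrable M (\<lambda>x. \<bar>a x - \<phi> x\<bar>)"
  proof (rule intb[where K="Ka+K1"])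
    show "(\<lambda>x. \<bar>a x - \<phi> x\<bar>) \<in> borel_measurable borel" using am pm by measurable
    fix x show "\<bar>\<bar>a x - \<phi> x\<bar>\<bar> \<le> Ka + K1" using Ka[of x] p(2)[rule_format, of x] by (smt (verit))
  qed
  have "(\<integral>x. \<bar>a x - \<phi> x\<bar> \<partial>M) \<le> (\<integral>x. \<bar>a x - b x\<bar> + \<bar>b x - \<phi> x\<bar> \<partial>M)"
    by (rule integral_mono[OF i3 Bochner_Integration.integrable_add[OF i1 i2]]) linarith
  also have "\<dots> = (\<integral>x. \<bar>a x - b x\<bar> \<partial>M) + (\<integral>x. \<bar>b x - \<phi> x\<bar> \<partial>M)"
    by (rule Bochner_Integration.integral_add[OF i1 i2])
  also have "(\<integral>x. \<bar>a x - b x\<bar> \<partial>M) \<le> (\<integral>x. d \<partial>M)"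
    by (rule integral_mono[OF i1]) (use b(2) in auto)
  also have "(\<integral>x. d \<partial>M) = d * measure M (space M)" by simp
  also have "d * measure M (space M) \<le> e/2"
  proof -
    have "d * measure M (space M) = e/2 * (measure M (space M) / (measure M (space M) + 1))"
      unfolding d_def by (simp add: field_simps)
    also have "\<dots> \<le> e/2 * 1"
    proof (intro mult_left_mono)
      show "measure M (space M) / (measure M (space M) + 1) \<le> 1" using mn by (smt (verit) divide_le_eq_1)
    qed (use e in simp)
    finally show ?thesis by simp
  qed
  finally show "\<exists>\<phi> K. continuous_on UNIV \<phi> \<and> (\<forall>x. \<bar>\<phi> x\<bar> \<le> K) \<and> (\<integral>x. \<bar>a x - \<phi> x\<bar> \<partial>M) < e"
    using p by (intro exI[of _ \<phi>] exI[of _ K1]) auto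
qed

lemma sum_indicator_level:
  fixes g :: "'a \<Rightarrow> int" and f :: "int \<Rightarrow> real"
  assumes "finite S"
  shows "(\<Sum>k\<in>S. f k * indicator {x. g x = k} x) = (if g x \<in> S then f (g x) else 0)"
proof -
  have "(\<Sum>k\<in>S. f k * indicator {x. g x = k} x) = (\<Sum>k\<in>S. if g x = k then f k else 0)"
    by (intro sum.cong) (auto simp: indicator_def)
  also have "\<dots> = (if g x \<in> S then f (g x) else 0)" using assms by (simp add: sum.delta)
  finally show ?thesis .
qed

lemma approxC_bounded:
  assumes am: "a \<in> borel_measurable borel" and Ka: "\<And>x. \<bar>a x\<bar> \<le> Ka"
  shows "approxC M a"
proof (rule approxC_unif[OF am Ka])
  fix d :: real assume d: "d > 0"
  define N :: nat where "N = nat \<lceil>1/d\<rceil> + 1"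
  have Npos: "real N > 0" unfolding N_def by simp
  have N: "real N > 0" "1 / real N \<le> d"
  proof -
    show "real N > 0" by (rule Npos)
    have "1/d \<le> real N" unfolding N_def by linarith
    then have "1 \<le> d * real N" using d by (simp add: field_simps)
    then show "1 / real N \<le> d" using d Npos by (simp add: field_simps)
  qed
  define L :: int where "L = int N * \<lceil>Ka\<rceil> + 1"
  define g where "g x = \<lfloor>real N * a x\<rfloor>" for x
  define b where "b x = (\<Sum>k\<in>{-L..L}. (real_of_int k / real N) * indicator {x. g x = k} x)" for x
  have bx: "b x = real_of_int (g x) / real N" for x
  proof -
    have "\<bar>real N * a x\<bar> \<le> real N * \<lceil>Ka\<rceil>"
      using Ka[of x] N(1) by (simp add: abs_mult) (meson le_of_int_ceiling mult_left_mono of_nat_0_le_iff order_trans)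
    then have h: "real N * a x \<le> real_of_int (int N * \<lceil>Ka\<rceil>)" "- real_of_int (int N * \<lceil>Ka\<rceil>) \<le> real N * a x"
      by (auto simp: abs_le_iff)
    have "-L \<le> g x" unfolding g_def L_def le_floor_iff using h(2) by simp
    moreover have "g x \<le> L" unfolding g_def L_def floor_le_iff using h(1) by simp
    ultimately have "g x \<in> {-L..L}" by simp
    then show ?thesis unfolding b_def by (subst sum_indicator_level) auto
  qed
  have "approxC M b" unfolding b_def
  proof (intro approxC_sum approxC_scale approxC_indicator)
    fix k show "{x. g x = k} \<in> sets borel" unfolding g_def using am by measurable
  qed simp
  moreover have "\<bar>a x - b x\<bar> \<le> d" for x
  proof -
    have "real_of_int (g x) \<le> real N * a x" "real N * a x < real_of_int (g x) + 1" unfolding g_def by linarith+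
    have eq: "a x - real_of_int (g x) / real N = (real N * a x - real_of_int (g x)) / real N"
      using N(1) by (simp add: field_simps)
    have "\<bar>a x - real_of_int (g x) / real N\<bar> = (real N * a x - real_of_int (g x)) / real N"
      unfolding eq using \<open>real_of_int (g x) \<le> real N * a x\<close> N(1) by simp
    also have "\<dots> \<le> 1 / real N"
      using \<open>real N * a x < real_of_int (g x) + 1\<close> N(1) by (intro divide_right_mono) auto
    finally have "\<bar>a x - real_of_int (g x) / real N\<bar> \<le> 1 / real N" .
    then show ?thesis using N(2) bx by simp
  qed
  ultimately show "\<exists>b. approxC M b \<and> (\<forall>x. \<bar>a x - b x\<bar> \<le> d)" by blast
qed

end


lemma vec_approx:
  fixes M :: "'a::polish_space measure" and S :: "'u::euclidean_space set" and \<gamma> :: "'a \<Rightarrow> 'u" and e :: real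
  assumes fm: "finite_measure M" and sM: "sets M = sets borel"
    and S: "compact S" "convex S" "S \<noteq> {}"
    and gm: "\<gamma> \<in> borel_measurable borel" and gS: "\<And>y. \<gamma> y \<in> S" and e: "e > 0"
  shows "\<exists>h. continuous_on UNIV h \<and> (\<forall>y. h y \<in> S) \<and> (\<integral>y. dist (h y) (\<gamma> y) \<partial>M) < e"
proof -
  interpret finite_measure M by (rule fm)
  obtain R where R: "\<And>u. u \<in> S \<Longrightarrow> norm u \<le> R"
    using compact_imp_bounded[OF S(1)] unfolding bounded_iff by blast
  define e' where "e' = e / (2 * real DIM('u))"
  have e': "e' > 0" unfolding e'_def using e by simp
  have "\<forall>b\<in>Basis. \<exists>\<phi>. continuous_on UNIV \<phi> \<and> (\<exists>K. \<forall>x. \<bar>\<phi> x\<bar> \<le> K) \<and> (\<integral>y. \<bar>\<gamma> y \<bullet> b - \<phi> y\<bar> \<partial>M) < e'"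
  proof
    fix b :: 'u assume b: "b \<in> Basis"
    have "approxC M (\<lambda>y. \<gamma> y \<bullet> b)"
    proof (rule approxC_bounded[OF fm sM])
      show "(\<lambda>y. \<gamma> y \<bullet> b) \<in> borel_measurable borel" using gm by measurable
      fix y show "\<bar>\<gamma> y \<bullet> b\<bar> \<le> R" using Basis_le_norm[OF b, of "\<gamma> y"] R[OF gS[of y]] by linarith
    qed
    then show "\<exists>\<phi>. continuous_on UNIV \<phi> \<and> (\<exists>K. \<forall>x. \<bar>\<phi> x\<bar> \<le> K) \<and> (\<integral>y. \<bar>\<gamma> y \<bullet> b - \<phi> y\<bar> \<partial>M) < e'"
      unfolding approxC_def using e' by blast
  qed
  then obtain \<phi> where \<phi>: "\<And>b. b \<in> Basis \<Longrightarrow> continuous_on UNIV (\<phi> b)"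
     "\<And>b. b \<in> Basis \<Longrightarrow> \<exists>K. \<forall>x. \<bar>\<phi> b x\<bar> \<le> K"
     "\<And>b. b \<in> Basis \<Longrightarrow> (\<integral>y. \<bar>\<gamma> y \<bullet> b - \<phi> b y\<bar> \<partial>M) < e'"
    by metis
  define h0 where "h0 y = (\<Sum>b\<in>Basis. \<phi> b y *\<^sub>R b)" for y
  define h where "h y = closest_point S (h0 y)" for y
  have cS: "closed S" using S(1) compact_imp_closed by blast
  have h0c: "continuous_on UNIV h0" unfolding h0_def using \<phi>(1) by (intro continuous_intros) auto
  have hc: "continuous_on UNIV h" unfolding h_def
    by (rule continuous_on_compose2[OF continuous_on_closest_point[OF S(2) cS S(3)] h0c]) auto
  have hS: "h y \<in> S" for y unfolding h_def by (rule closest_point_in_set[OF cS S(3)])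
  have pw: "dist (h y) (\<gamma> y) \<le> 2 * (\<Sum>b\<in>Basis. \<bar>\<gamma> y \<bullet> b - \<phi> b y\<bar>)" for y
  proof -
    have d1: "dist (h y) (h0 y) \<le> dist (h0 y) (\<gamma> y)"
      unfolding h_def using closest_point_le[OF cS gS[of y], of "h0 y"] by (simp add: dist_commute)
    have "dist (h0 y) (\<gamma> y) = norm (\<Sum>b\<in>Basis. (\<phi> b y - \<gamma> y \<bullet> b) *\<^sub>R b)"
    proof -
      have "\<gamma> y = (\<Sum>b\<in>Basis. (\<gamma> y \<bullet> b) *\<^sub>R b)" by (simp add: euclidean_representation)
      then have "h0 y - \<gamma> y = (\<Sum>b\<in>Basis. \<phi> b y *\<^sub>R b) - (\<Sum>b\<in>Basis. (\<gamma> y \<bullet> b) *\<^sub>R b)"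
        unfolding h0_def by simp
      also have "\<dots> = (\<Sum>b\<in>Basis. (\<phi> b y - \<gamma> y \<bullet> b) *\<^sub>R b)"
        by (simp add: sum_subtractf scaleR_diff_left)
      finally show ?thesis by (simp add: dist_norm)
    qed
    also have "\<dots> \<le> (\<Sum>b\<in>Basis. norm ((\<phi> b y - \<gamma> y \<bullet> b) *\<^sub>R b))" by (rule norm_sum)
    also have "\<dots> = (\<Sum>b\<in>Basis. \<bar>\<gamma> y \<bullet> b - \<phi> b y\<bar>)" by (intro sum.cong) auto
    finally have d2: "dist (h0 y) (\<gamma> y) \<le> (\<Sum>b\<in>Basis. \<bar>\<gamma> y \<bullet> b - \<phi> b y\<bar>)" .
    have "dist (h y) (\<gamma> y) \<le> dist (h y) (h0 y) + dist (h0 y) (\<gamma> y)" by (rule dist_triangle)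
    then show ?thesis using d1 d2 by linarith
  qed
  have ib: "integrable M (\<lambda>y. \<bar>\<gamma> y \<bullet> b - \<phi> b y\<bar>)" if b: "b \<in> Basis" for b
  proof -
    obtain K where K: "\<forall>x. \<bar>\<phi> b x\<bar> \<le> K" using \<phi>(2)[OF b] by blast
    have pm: "\<phi> b \<in> borel_measurable borel" using \<phi>(1)[OF b] by (rule borel_measurable_continuous_onI)
    show ?thesis
    proof (rule intb[OF fm sM, where K="R + K"])
      show "(\<lambda>y. \<bar>\<gamma> y \<bullet> b - \<phi> b y\<bar>) \<in> borel_measurable borel" using gm pm by measurable
      fix y show "\<bar>\<bar>\<gamma> y \<bullet> b - \<phi> b y\<bar>\<bar> \<le> R + K"
        using Basis_le_norm[OF b, of "\<gamma> y"] R[OF gS[of y]] K[rule_format, of y] by (smt (verit))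
    qed
  qed
  have idist: "integrable M (\<lambda>y. dist (h y) (\<gamma> y))"
  proof (rule intb[OF fm sM, where K="2*R"])
    have "h \<in> borel_measurable borel" using hc by (rule borel_measurable_continuous_onI)
    then show "(\<lambda>y. dist (h y) (\<gamma> y)) \<in> borel_measurable borel" using gm by measurable
    fix y show "\<bar>dist (h y) (\<gamma> y)\<bar> \<le> 2 * R"
      using dist_triangle2[of "h y" "\<gamma> y" 0] R[OF hS[of y]] R[OF gS[of y]] by (simp add: dist_norm)
  qed
  have "(\<integral>y. dist (h y) (\<gamma> y) \<partial>M) \<le> (\<integral>y. 2 * (\<Sum>b\<in>Basis. \<bar>\<gamma> y \<bullet> b - \<phi> b y\<bar>) \<partial>M)"
    by (rule integral_mono[OF idist _ pw]) (use ib in auto)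
  also have "\<dots> = 2 * (\<Sum>b\<in>Basis. (\<integral>y. \<bar>\<gamma> y \<bullet> b - \<phi> b y\<bar> \<partial>M))"
    using ib by (simp add: integral_sum)
  also have "\<dots> < 2 * (\<Sum>b\<in>(Basis::'u set). e')"
    using \<phi>(3) by (intro mult_strict_left_mono sum_strict_mono) auto
  also have "\<dots> = e" unfolding e'_def by simp
  finally show ?thesis using hc hS by blast
qed



definition Dset :: "'v::{metric_space,second_countable_topology} set \<Rightarrow> 'v set" where
  "Dset P = (SOME D. countable D \<and> D \<subseteq> P \<and> P \<subseteq> closure D)"

lemma Dset: "countable (Dset P)" "Dset P \<subseteq> P" "P \<subseteq> closure (Dset P)"
proof -
  obtain T where "countable T" "T \<subseteq> P" "P \<subseteq> closure T" by (rule separable)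
  then have "\<exists>D. countable D \<and> D \<subseteq> P \<and> P \<subseteq> closure D" by blast
  from someI_ex[OF this] show "countable (Dset P)" "Dset P \<subseteq> P" "P \<subseteq> closure (Dset P)"
    unfolding Dset_def by auto
qed

definition omg :: "('x \<times> 'v::{metric_space,second_countable_topology} \<Rightarrow> real) \<Rightarrow> 'v set \<Rightarrow> 'x \<Rightarrow> real \<Rightarrow> real" where
  "omg c P x \<delta> = (SUP p\<in>{p\<in>Dset P \<times> Dset P. dist (fst p) (snd p) < \<delta>}. \<bar>c (x, fst p) - c (x, snd p)\<bar>)"

context
  fixes c :: "'x::polish_space \<times> 'v::{metric_space,second_countable_topology} \<Rightarrow> real"
    and P :: "'v set" and B :: real
  assumes cm: "c \<in> borel_measurable borel"
    and cB: "\<And>x u. u \<in> P \<Longrightarrow> \<bar>c (x, u)\<bar> \<le> B"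
    and Pc: "compact P" and Pne: "P \<noteq> {}"
    and cc: "\<And>x. continuous_on P (\<lambda>u. c (x, u))"
begin

lemma Dne: "Dset P \<noteq> {}"
  using Dset(3)[of P] Pne by auto

lemma Ine: "\<delta> > 0 \<Longrightarrow> {p\<in>Dset P \<times> Dset P. dist (fst p) (snd p) < \<delta>} \<noteq> {}"
proof -
  assume d: "\<delta> > 0"
  obtain d where "d \<in> Dset P" using Dne by blast
  then have "(d, d) \<in> {p\<in>Dset P \<times> Dset P. dist (fst p) (snd p) < \<delta>}" using d by simp
  then show ?thesis by blast
qed

lemma omg_bdd: "bdd_above ((\<lambda>p. \<bar>c (x, fst p) - c (x, snd p)\<bar>) ` {p\<in>Dset P \<times> Dset P. dist (fst p) (snd p) < \<delta>})"
proof (rule bdd_aboveI2)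
  fix p assume "p \<in> {p\<in>Dset P \<times> Dset P. dist (fst p) (snd p) < \<delta>}"
  then have "fst p \<in> P" "snd p \<in> P" using Dset(2)[of P] by auto
  then show "\<bar>c (x, fst p) - c (x, snd p)\<bar> \<le> 2 * B" using cB[of "fst p" x] cB[of "snd p" x] by linarith
qed

lemma omg_nonneg: "\<delta> > 0 \<Longrightarrow> 0 \<le> omg c P x \<delta>"
proof -
  assume d: "\<delta> > 0"
  obtain p where p: "p \<in> {p\<in>Dset P \<times> Dset P. dist (fst p) (snd p) < \<delta>}" using Ine[OF d] by blast
  have "0 \<le> \<bar>c (x, fst p) - c (x, snd p)\<bar>" by simp
  also have "\<dots> \<le> omg c P x \<delta>" unfolding omg_def by (rule cSUP_upper[OF p omg_bdd])
  finally show ?thesis .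
qed

lemma omg_le: "\<delta> > 0 \<Longrightarrow> omg c P x \<delta> \<le> 2 * B"
  unfolding omg_def
proof (rule cSUP_least[OF Ine])
  fix p assume "p \<in> {p\<in>Dset P \<times> Dset P. dist (fst p) (snd p) < \<delta>}"
  then have "fst p \<in> P" "snd p \<in> P" using Dset(2)[of P] by auto
  then show "\<bar>c (x, fst p) - c (x, snd p)\<bar> \<le> 2 * B" using cB[of "fst p" x] cB[of "snd p" x] by linarith
qed

lemma c_slice_meas: "(\<lambda>x. c (x, u)) \<in> borel_measurable borel"
proof -
  have "(\<lambda>x::'x. (x, u)) \<in> borel_measurable borel"
    by (intro borel_measurable_continuous_onI continuous_intros)
  from measurable_comp[OF this cm] show ?thesis by (simp add: comp_def)
qed

lemma omg_meas: "(\<lambda>x. omg c P x \<delta>) \<in> borel_measurable borel"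
  unfolding omg_def
proof (rule borel_measurable_cSUP)
  show "countable {p\<in>Dset P \<times> Dset P. dist (fst p) (snd p) < \<delta>}"
    using Dset(1)[of P] by (intro countable_subset[OF _ countable_SIGMA]) auto
  fix p show "(\<lambda>x. \<bar>c (x, fst p) - c (x, snd p)\<bar>) \<in> borel_measurable borel"
    using c_slice_meas[of "fst p"] c_slice_meas[of "snd p"] by measurable
qed (rule omg_bdd)

lemma omg_bound:
  assumes u: "u \<in> P" and v: "v \<in> P" and duv: "dist u v < \<delta>"
  shows "\<bar>c (x, u) - c (x, v)\<bar> \<le> omg c P x \<delta>"
proof -
  obtain X where X: "\<And>n. X n \<in> Dset P" "X \<longlonglongrightarrow> u"
    using Dset(3)[of P] u closure_sequential by blast
  obtain Y where Y: "\<And>n. Y n \<in> Dset P" "Y \<longlonglongrightarrow> v"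
    using Dset(3)[of P] v closure_sequential by blast
  have XP: "X n \<in> P" "Y n \<in> P" for n using X(1) Y(1) Dset(2)[of P] by auto
  have l1: "(\<lambda>n. c (x, X n)) \<longlonglongrightarrow> c (x, u)"
    by (rule continuous_on_tendsto_compose[OF cc X(2) u]) (use XP in auto)
  have l2: "(\<lambda>n. c (x, Y n)) \<longlonglongrightarrow> c (x, v)"
    by (rule continuous_on_tendsto_compose[OF cc Y(2) v]) (use XP in auto)
  have l3: "(\<lambda>n. \<bar>c (x, X n) - c (x, Y n)\<bar>) \<longlonglongrightarrow> \<bar>c (x, u) - c (x, v)\<bar>"
    by (intro tendsto_intros l1 l2)
  have "(\<lambda>n. dist (X n) (Y n)) \<longlonglongrightarrow> dist u v" by (intro tendsto_intros X(2) Y(2))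
  then have "eventually (\<lambda>n. dist (X n) (Y n) < \<delta>) sequentially"
    using duv order_tendstoD(2) by blast
  then have "eventually (\<lambda>n. \<bar>c (x, X n) - c (x, Y n)\<bar> \<le> omg c P x \<delta>) sequentially"
  proof (rule eventually_mono)
    fix n assume "dist (X n) (Y n) < \<delta>"
    then have "(X n, Y n) \<in> {p\<in>Dset P \<times> Dset P. dist (fst p) (snd p) < \<delta>}" using X(1) Y(1) by simp
    from cSUP_upper[OF this omg_bdd] show "\<bar>c (x, X n) - c (x, Y n)\<bar> \<le> omg c P x \<delta>"
      unfolding omg_def by simp
  qed
  then show ?thesis by (rule tendsto_upperbound[OF l3]) simp
qed

lemma omg_tendsto: "(\<lambda>k. omg c P x (1 / Suc k)) \<longlonglongrightarrow> 0"
proof (rule LIMSEQ_I)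
  fix e :: real assume e: "e > 0"
  have uc: "uniformly_continuous_on P (\<lambda>u. c (x, u))"
    by (rule compact_uniformly_continuous[OF cc Pc])
  obtain d where d: "d > 0" "\<And>u v. u \<in> P \<Longrightarrow> v \<in> P \<Longrightarrow> dist v u < d \<Longrightarrow> dist (c (x, v)) (c (x, u)) < e/2"
    using uc e unfolding uniformly_continuous_on_def by (meson half_gt_zero)
  obtain no where no: "inverse (real (Suc no)) < d" using reals_Archimedean[OF d(1)] by blast
  show "\<exists>no. \<forall>n\<ge>no. norm (omg c P x (1 / real (Suc n)) - 0) < e"
  proof (intro exI allI impI)
    fix n assume n: "no \<le> n"
    have dn: "1 / real (Suc n) < d"
    proof -
      have "1 / real (Suc n) \<le> 1 / real (Suc no)" using n by (intro divide_left_mono) auto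
      then show ?thesis using no by (simp add: inverse_eq_divide)
    qed
    have "omg c P x (1 / real (Suc n)) \<le> e/2"
      unfolding omg_def
    proof (rule cSUP_least[OF Ine])
      fix p assume p: "p \<in> {p\<in>Dset P \<times> Dset P. dist (fst p) (snd p) < 1 / real (Suc n)}"
      then have "fst p \<in> P" "snd p \<in> P" using Dset(2)[of P] by auto
      moreover have "dist (fst p) (snd p) < d" using p dn by auto
      ultimately have "dist (c (x, fst p)) (c (x, snd p)) < e/2" using d(2) by blast
      then show "\<bar>c (x, fst p) - c (x, snd p)\<bar> \<le> e/2" by (simp add: dist_real_def)
    qed simp
    moreover have "0 \<le> omg c P x (1 / real (Suc n))" by (rule omg_nonneg) simp
    ultimately show "norm (omg c P x (1 / real (Suc n)) - 0) < e" using e by simp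
  qed
qed

lemma omg_int_small:
  fixes N :: "'x measure" and e :: real
  assumes fN: "finite_measure N" and sN: "sets N = sets borel" and e: "e > 0"
  shows "\<exists>\<delta>>0. (\<integral>x. omg c P x \<delta> \<partial>N) < e \<and> integrable N (\<lambda>x. omg c P x \<delta>)"
proof -
  interpret finite_measure N by (rule fN)
  have mN: "(\<lambda>x. omg c P x \<delta>) \<in> borel_measurable N" for \<delta>
    using omg_meas measurable_cong_sets[OF sN refl] by blast
  have lim: "(\<lambda>k. (\<integral>x. omg c P x (1 / Suc k) \<partial>N)) \<longlonglongrightarrow> (\<integral>x. 0 \<partial>N)"
  proof (rule integral_dominated_convergence[where w="\<lambda>_. 2 * B"])
    show "(\<lambda>x. 0::real) \<in> borel_measurable N" by simp
    show "\<And>k. (\<lambda>x. omg c P x (1 / Suc k)) \<in> borel_measurable N" by (rule mN)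
    show "integrable N (\<lambda>_. 2 * B)" by simp
    show "AE x in N. (\<lambda>k. omg c P x (1 / Suc k)) \<longlonglongrightarrow> 0" by (intro AE_I2 omg_tendsto)
    show "\<And>k. AE x in N. norm (omg c P x (1 / Suc k)) \<le> 2 * B"
      using omg_nonneg omg_le by (intro AE_I2) simp
  qed
  have "eventually (\<lambda>k. (\<integral>x. omg c P x (1 / Suc k) \<partial>N) < e) sequentially"
    using order_tendstoD(2)[OF lim] e by simp
  then obtain k where k: "(\<integral>x. omg c P x (1 / Suc k) \<partial>N) < e"
    unfolding eventually_sequentially by blast
  have "integrable N (\<lambda>x. omg c P x (1 / Suc k))"
    by (rule integrable_const_bound[where B="2*B"]) (use omg_nonneg omg_le mN in auto)
  then show ?thesis using k by (intro exI[of _ "1 / Suc k"]) auto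
qed

end


lemma fun_dist_le:
  fixes u v :: "'i::finite \<Rightarrow> 'u::metric_space"
  shows "dist u v \<le> 2 * (\<Sum>i\<in>UNIV. dist (u i) (v i))"
proof -
  define S where "S = (\<Sum>i\<in>UNIV. dist (u i) (v i))"
  have gs: "summable (\<lambda>n. (1/2::real)^n)" by (rule summable_geometric) simp
  have s1: "summable (\<lambda>n. (1/2::real)^n * S)" by (rule summable_mult2[OF gs])
  have le: "(1/2)^n * min (dist (u (from_nat n)) (v (from_nat n))) 1 \<le> (1/2)^n * S" for n
  proof -
    have "dist (u (from_nat n)) (v (from_nat n)) \<le> S"
      unfolding S_def by (rule member_le_sum) auto
    then show ?thesis by (intro mult_left_mono) auto
  qed
  have s2: "summable (\<lambda>n. (1/2::real)^n * min (dist (u (from_nat n)) (v (from_nat n))) 1)"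
    by (rule summable_comparison_test'[OF gs, of 0]) (auto simp: abs_mult)
  have "dist u v = (\<Sum>n. (1/2)^n * min (dist (u (from_nat n)) (v (from_nat n))) 1)"
    unfolding dist_fun_def by (rule refl)
  also have "\<dots> \<le> (\<Sum>n. (1/2::real)^n * S)" by (rule suminf_le[OF le s2 s1])
  also have "\<dots> = (\<Sum>n. (1/2::real)^n) * S" by (rule suminf_mult2[OF gs, symmetric])
  also have "\<dots> = 2 * S" using suminf_geometric[of "1/2::real"] by simp
  finally show ?thesis unfolding S_def .
qed

lemma policy_meas:
  fixes c :: "'x::polish_space \<times> ('i::finite \<Rightarrow> 'u::euclidean_space) \<Rightarrow> real"
    and \<gamma> :: "'i \<Rightarrow> 'y::polish_space \<Rightarrow> 'u"
  assumes cm: "c \<in> borel_measurable borel" and gm: "\<And>i. \<gamma> i \<in> borel_measurable borel"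
  shows "(\<lambda>z::'x \<times> ('i \<Rightarrow> 'y). c (fst z, \<lambda>i. \<gamma> i (snd z i))) \<in> borel_measurable borel"
proof -
  have f: "(fst :: 'x \<times> ('i \<Rightarrow> 'y) \<Rightarrow> 'x) \<in> borel_measurable borel"
    by (rule borel_measurable_continuous_onI[OF continuous_on_fst[OF continuous_on_id]])
  have co: "(\<lambda>z::'x \<times> ('i \<Rightarrow> 'y). \<gamma> i (snd z i)) \<in> borel_measurable borel" for i
  proof -
    have "(\<lambda>z::'x \<times> ('i \<Rightarrow> 'y). snd z i) \<in> borel_measurable borel"
    proof (rule borel_measurable_continuous_onI)
      have "continuous_on UNIV (\<lambda>z::'x \<times> ('i \<Rightarrow> 'y). snd z)" by (rule continuous_on_snd[OF continuous_on_id])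
      then show "continuous_on UNIV (\<lambda>z::'x \<times> ('i \<Rightarrow> 'y). snd z i)" by (rule continuous_on_product_then_coordinatewise)
    qed
    from measurable_comp[OF this gm[of i]] show ?thesis by (simp add: comp_def)
  qed
  have g: "(\<lambda>z::'x \<times> ('i \<Rightarrow> 'y). \<lambda>i. \<gamma> i (snd z i)) \<in> borel_measurable borel"
    by (rule measurable_coordinatewise_then_product) (rule co)
  have "(\<lambda>z::'x \<times> ('i \<Rightarrow> 'y). (fst z, \<lambda>i. \<gamma> i (snd z i))) \<in> borel \<rightarrow>\<^sub>M (borel \<Otimes>\<^sub>M borel)"
    by (rule measurable_Pair[OF f g])
  then have "(\<lambda>z::'x \<times> ('i \<Rightarrow> 'y). (fst z, \<lambda>i. \<gamma> i (snd z i))) \<in> borel \<rightarrow>\<^sub>M borel"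
    by (simp add: borel_prod)
  from measurable_comp[OF this cm] show ?thesis by (simp add: comp_def)
qed

lemma policy_in: "\<gamma> \<in> team_policies U \<Longrightarrow> (\<lambda>i. \<gamma> i (y i)) \<in> Pi\<^sub>E UNIV U"
  unfolding team_policies_def by auto



lemma prior_facts:
  fixes M :: "('x::polish_space \<times> 'z::polish_space) measure"
  assumes "info_structure M"
  shows "fst \<in> M \<rightarrow>\<^sub>M (borel :: 'x measure)" "finite_measure (prior M)" "sets (prior M) = sets borel"
    "snd \<in> M \<rightarrow>\<^sub>M (borel :: 'z measure)"
proof -
  have s: "sets M = sets borel" using assms unfolding info_structure_def by simp
  interpret prob_space M using assms unfolding info_structure_def by simp
  show fm: "fst \<in> M \<rightarrow>\<^sub>M (borel :: 'x measure)"
    unfolding measurable_cong_sets[OF s refl]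
    by (rule borel_measurable_continuous_onI[OF continuous_on_fst[OF continuous_on_id]])
  show "snd \<in> M \<rightarrow>\<^sub>M (borel :: 'z measure)"
    unfolding measurable_cong_sets[OF s refl]
    by (rule borel_measurable_continuous_onI[OF continuous_on_snd[OF continuous_on_id]])
  show "finite_measure (prior M)" unfolding prior_def
    using prob_space_distr[OF fm] unfolding prob_space_def by blast
  show "sets (prior M) = sets borel" unfolding prior_def by simp
qed

lemma prod_diff_bound:
  fixes M :: "('x::polish_space \<times> 'z::polish_space) measure"
    and a \<phi> :: "'x \<Rightarrow> real" and b :: "'z \<Rightarrow> real"
  assumes info: "info_structure M"
    and am: "a \<in> borel_measurable borel" and Ka: "\<And>x. \<bar>a x\<bar> \<le> Ka"
    and pm: "\<phi> \<in> borel_measurable borel" and Kp: "\<And>x. \<bar>\<phi> x\<bar> \<le> Kp"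
    and bm: "b \<in> borel_measurable borel" and Kb: "\<And>z. \<bar>b z\<bar> \<le> Kb"
  shows "\<bar>(\<integral>z. a (fst z) * b (snd z) \<partial>M) - (\<integral>z. \<phi> (fst z) * b (snd z) \<partial>M)\<bar>
          \<le> Kb * (\<integral>x. \<bar>a x - \<phi> x\<bar> \<partial>prior M)"
proof -
  interpret prob_space M using info unfolding info_structure_def by simp
  note pf = prior_facts[OF info]
  have m1: "(\<lambda>z. a (fst z)) \<in> borel_measurable M" using measurable_comp[OF pf(1) am] by (simp add: comp_def)
  have m2: "(\<lambda>z. \<phi> (fst z)) \<in> borel_measurable M" using measurable_comp[OF pf(1) pm] by (simp add: comp_def)
  have m3: "(\<lambda>z. b (snd z)) \<in> borel_measurable M" using measurable_comp[OF pf(4) bm] by (simp add: comp_def)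
  have i1: "integrable M (\<lambda>z. a (fst z) * b (snd z))"
    by (rule integrable_const_bound[where B="Ka*Kb"]) 
       (use m1 m3 Ka Kb in \<open>auto intro!: AE_I2 simp: abs_mult intro: mult_mono' order_trans[OF abs_ge_zero]\<close>)
  have i2: "integrable M (\<lambda>z. \<phi> (fst z) * b (snd z))"
    by (rule integrable_const_bound[where B="Kp*Kb"]) 
       (use m2 m3 Kp Kb in \<open>auto intro!: AE_I2 simp: abs_mult intro: mult_mono' order_trans[OF abs_ge_zero]\<close>)
  have i3: "integrable M (\<lambda>z. \<bar>a (fst z) - \<phi> (fst z)\<bar>)"
    by (rule integrable_const_bound[where B="Ka+Kp"]) 
       (use m1 m2 Ka Kp in \<open>auto intro!: AE_I2 intro: abs_triangle_ineq4[THEN order_trans] add_mono\<close>)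
  have "\<bar>(\<integral>z. a (fst z) * b (snd z) \<partial>M) - (\<integral>z. \<phi> (fst z) * b (snd z) \<partial>M)\<bar>
     = \<bar>\<integral>z. a (fst z) * b (snd z) - \<phi> (fst z) * b (snd z) \<partial>M\<bar>"
    by (simp add: Bochner_Integration.integral_diff[OF i1 i2])
  also have "\<dots> \<le> (\<integral>z. \<bar>a (fst z) * b (snd z) - \<phi> (fst z) * b (snd z)\<bar> \<partial>M)"
    using integral_norm_bound[of M "\<lambda>z. a (fst z) * b (snd z) - \<phi> (fst z) * b (snd z)"] by simp
  also have "\<dots> \<le> (\<integral>z. Kb * \<bar>a (fst z) - \<phi> (fst z)\<bar> \<partial>M)"
  proof (rule integral_mono)
    show "integrable M (\<lambda>z. \<bar>a (fst z) * b (snd z) - \<phi> (fst z) * b (snd z)\<bar>)"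
      by (intro integrable_abs Bochner_Integration.integrable_diff i1 i2)
    show "integrable M (\<lambda>z. Kb * \<bar>a (fst z) - \<phi> (fst z)\<bar>)" using i3 by simp
    fix z
    have e1: "\<bar>a (fst z) * b (snd z) - \<phi> (fst z) * b (snd z)\<bar> = \<bar>a (fst z) - \<phi> (fst z)\<bar> * \<bar>b (snd z)\<bar>"
      by (simp add: abs_mult left_diff_distrib[symmetric])
    have e2: "\<bar>a (fst z) - \<phi> (fst z)\<bar> * \<bar>b (snd z)\<bar> \<le> \<bar>a (fst z) - \<phi> (fst z)\<bar> * Kb"
      using Kb[of "snd z"] by (intro mult_left_mono) auto
    show "\<bar>a (fst z) * b (snd z) - \<phi> (fst z) * b (snd z)\<bar> \<le> Kb * \<bar>a (fst z) - \<phi> (fst z)\<bar>"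
      using e1 e2 by (simp add: mult.commute)
  qed
  also have "\<dots> = Kb * (\<integral>z. \<bar>a (fst z) - \<phi> (fst z)\<bar> \<partial>M)" by simp
  also have "(\<integral>z. \<bar>a (fst z) - \<phi> (fst z)\<bar> \<partial>M) = (\<integral>x. \<bar>a x - \<phi> x\<bar> \<partial>prior M)"
    unfolding prior_def using am pm by (intro integral_distr[OF pf(1), symmetric]) measurable
  finally show ?thesis .
qed

lemma cont_fst_comp: "continuous_on UNIV f \<Longrightarrow> continuous_on UNIV (\<lambda>z. f (fst z))"
  by (rule continuous_on_compose2[OF _ continuous_on_fst[OF continuous_on_id]]) auto

lemma cont_snd_comp: "continuous_on UNIV f \<Longrightarrow> continuous_on UNIV (\<lambda>z. f (snd z))"
  by (rule continuous_on_compose2[OF _ continuous_on_snd[OF continuous_on_id]]) auto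

lemma prod_conv:
  fixes \<mu>s :: "nat \<Rightarrow> ('x::polish_space \<times> 'z::polish_space) measure" and \<mu>
    and a :: "'x \<Rightarrow> real" and b :: "'z \<Rightarrow> real"
  assumes info_m: "\<And>m. info_structure (\<mu>s m)" and info: "info_structure \<mu>"
    and pr: "\<And>m. prior (\<mu>s m) = prior \<mu>" and conv: "weak_conv_seq \<mu>s \<mu>"
    and am: "a \<in> borel_measurable borel" and Ka: "\<And>x. \<bar>a x\<bar> \<le> Ka"
    and bc: "continuous_on UNIV b" and Kb: "\<And>z. \<bar>b z\<bar> \<le> Kb"
  shows "(\<lambda>m. \<integral>z. a (fst z) * b (snd z) \<partial>\<mu>s m) \<longlonglongrightarrow> (\<integral>z. a (fst z) * b (snd z) \<partial>\<mu>)"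
proof (rule LIMSEQ_I)
  fix e :: real assume e: "e > 0"
  define Kb' where "Kb' = \<bar>Kb\<bar> + 1"
  have Kb'1: "Kb' > 0" unfolding Kb'_def by simp
  have Kb'2: "\<bar>b z\<bar> \<le> Kb'" for z using Kb[of z] unfolding Kb'_def by linarith
  note Kb' = Kb'1 Kb'2
  note pf = prior_facts[OF info]
  have bm: "b \<in> borel_measurable borel" using bc by (rule borel_measurable_continuous_onI)
  have "approxC (prior \<mu>) a" by (rule approxC_bounded[OF pf(2) pf(3) am Ka])
  moreover have e': "e / (3 * Kb') > 0" using e Kb' by simp
  ultimately obtain \<phi> K1 where p: "continuous_on UNIV \<phi>" "\<forall>x. \<bar>\<phi> x\<bar> \<le> K1"
    "(\<integral>x. \<bar>a x - \<phi> x\<bar> \<partial>prior \<mu>) < e / (3 * Kb')"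
    unfolding approxC_def by blast
  have pm: "\<phi> \<in> borel_measurable borel" using p(1) by (rule borel_measurable_continuous_onI)
  have close: "\<bar>(\<integral>z. a (fst z) * b (snd z) \<partial>M) - (\<integral>z. \<phi> (fst z) * b (snd z) \<partial>M)\<bar> < e/3"
    if M: "info_structure M" "prior M = prior \<mu>" for M :: "('x \<times> 'z) measure"
  proof -
    have "\<bar>(\<integral>z. a (fst z) * b (snd z) \<partial>M) - (\<integral>z. \<phi> (fst z) * b (snd z) \<partial>M)\<bar>
        \<le> Kb' * (\<integral>x. \<bar>a x - \<phi> x\<bar> \<partial>prior M)"
      by (rule prod_diff_bound[OF M(1) am Ka pm _ bm Kb'(2)]) (use p(2) in auto)
    also have "\<dots> < Kb' * (e / (3 * Kb'))" unfolding M(2) using p(3) Kb'(1) by (rule mult_strict_left_mono)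
    also have "\<dots> = e/3" using Kb'(1) by simp
    finally show ?thesis .
  qed
  define F where "F z = \<phi> (fst z) * b (snd z)" for z :: "'x \<times> 'z"
  have Fc: "continuous_on UNIV F" unfolding F_def
    by (intro continuous_on_mult cont_fst_comp cont_snd_comp p(1) bc)
  have Fb: "bounded (range F)" unfolding bounded_iff
  proof (intro exI ballI)
    fix y assume "y \<in> range F"
    then obtain z where "y = F z" by blast
    then show "norm y \<le> K1 * Kb'" unfolding F_def using p(2) Kb'(2)[of "snd z"]
      by (simp add: abs_mult) (meson abs_ge_zero mult_mono')
  qed
  have lim: "(\<lambda>m. \<integral>z. F z \<partial>\<mu>s m) \<longlonglongrightarrow> (\<integral>z. F z \<partial>\<mu>)"
    using conv Fc Fb unfolding weak_conv_seq_def by blast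
  obtain N where N: "\<And>m. m \<ge> N \<Longrightarrow> norm ((\<integral>z. F z \<partial>\<mu>s m) - (\<integral>z. F z \<partial>\<mu>)) < e/3"
    using LIMSEQ_D[OF lim, of "e/3"] e by auto
  show "\<exists>no. \<forall>m\<ge>no. norm ((\<integral>z. a (fst z) * b (snd z) \<partial>\<mu>s m) - (\<integral>z. a (fst z) * b (snd z) \<partial>\<mu>)) < e"
  proof (intro exI allI impI)
    fix m assume m: "N \<le> m"
    have c1: "\<bar>(\<integral>z. a (fst z) * b (snd z) \<partial>\<mu>s m) - (\<integral>z. F z \<partial>\<mu>s m)\<bar> < e/3"
      unfolding F_def by (rule close[OF info_m pr])
    have c2: "\<bar>(\<integral>z. a (fst z) * b (snd z) \<partial>\<mu>) - (\<integral>z. F z \<partial>\<mu>)\<bar> < e/3"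
      unfolding F_def by (rule close[OF info refl])
    have c3: "\<bar>(\<integral>z. F z \<partial>\<mu>s m) - (\<integral>z. F z \<partial>\<mu>)\<bar> < e/3" using N[OF m] by simp
    show "norm ((\<integral>z. a (fst z) * b (snd z) \<partial>\<mu>s m) - (\<integral>z. a (fst z) * b (snd z) \<partial>\<mu>)) < e"
      unfolding real_norm_def using c1 c2 c3 by linarith
  qed
qed



lemma compact_PiE_UNIV: "compact (Pi\<^sub>E UNIV (U::'i::finite \<Rightarrow> 'u::euclidean_space set))" if "\<And>i. compact (U i)"
proof -
  have "compactin (product_topology (\<lambda>i. euclidean) UNIV) (Pi\<^sub>E UNIV U)"
    using that by (simp add: compactin_PiE)
  thus ?thesis by (simp add: euclidean_product_topology)
qed

context
  fixes U :: "'i::finite \<Rightarrow> 'u::euclidean_space set"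
    and c :: "'x::polish_space \<times> ('i \<Rightarrow> 'u) \<Rightarrow> real" and B :: real
  assumes cm: "c \<in> borel_measurable borel"
    and cB: "\<And>x u. u \<in> Pi\<^sub>E UNIV U \<Longrightarrow> \<bar>c (x, u)\<bar> \<le> B"
    and cpt: "\<And>i. compact (U i)" and Une: "\<And>i. U i \<noteq> {}"
    and cc: "\<And>x. continuous_on (Pi\<^sub>E UNIV U) (\<lambda>u. c (x, u))"
    and cvx: "\<And>i. convex (U i)"
begin

lemma PUc: "compact (Pi\<^sub>E UNIV U)" by (rule compact_PiE_UNIV[OF cpt])
lemma PUne: "Pi\<^sub>E UNIV U \<noteq> {}" using Une by (simp add: PiE_eq_empty_iff)

lemma pol_meas: "\<gamma> \<in> team_policies U \<Longrightarrow> \<gamma> i \<in> borel_measurable borel"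
  unfolding team_policies_def by auto

lemma cost_meas:
  fixes \<mu> :: "('x \<times> ('i \<Rightarrow> 'y::polish_space)) measure"
  assumes info: "info_structure \<mu>" and g: "\<gamma> \<in> team_policies U"
  shows "(\<lambda>z. c (fst z, \<lambda>i. \<gamma> i (snd z i))) \<in> borel_measurable \<mu>"
proof -
  have s: "sets \<mu> = sets borel" using info unfolding info_structure_def by simp
  have "(\<lambda>z::'x \<times> ('i \<Rightarrow> 'y). c (fst z, \<lambda>i. \<gamma> i (snd z i))) \<in> borel_measurable borel"
    by (rule policy_meas[OF cm]) (rule pol_meas[OF g])
  then show ?thesis unfolding measurable_cong_sets[OF s refl] .
qed

lemma cost_int:
  fixes \<mu> :: "('x \<times> ('i \<Rightarrow> 'y::polish_space)) measure"
  assumes info: "info_structure \<mu>" and g: "\<gamma> \<in> team_policies U"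
  shows "integrable \<mu> (\<lambda>z. c (fst z, \<lambda>i. \<gamma> i (snd z i)))"
proof -
  interpret prob_space \<mu> using info unfolding info_structure_def by simp
  show ?thesis
  proof (rule integrable_const_bound[where B=B])
    show "AE x in \<mu>. norm (c (fst x, \<lambda>i. \<gamma> i (snd x i))) \<le> B"
    proof (rule AE_I2)
      fix z :: "'x \<times> ('i \<Rightarrow> 'y)"
      show "norm (c (fst z, \<lambda>i. \<gamma> i (snd z i))) \<le> B"
        using cB[OF policy_in[OF g, of "snd z"], of "fst z"] by simp
    qed
  qed (rule cost_meas[OF info g])
qed

lemma cost_bound:
  fixes \<mu> :: "('x \<times> ('i \<Rightarrow> 'y::polish_space)) measure"
  assumes info: "info_structure \<mu>" and g: "\<gamma> \<in> team_policies U"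
  shows "\<bar>team_cost c \<mu> \<gamma>\<bar> \<le> B"
proof -
  interpret prob_space \<mu> using info unfolding info_structure_def by simp
  have "\<bar>team_cost c \<mu> \<gamma>\<bar> \<le> (\<integral>z. \<bar>c (fst z, \<lambda>i. \<gamma> i (snd z i))\<bar> \<partial>\<mu>)"
    unfolding team_cost_def using integral_norm_bound[of \<mu> "\<lambda>z. c (fst z, \<lambda>i. \<gamma> i (snd z i))"] by simp
  also have "\<dots> \<le> (\<integral>z. B \<partial>\<mu>)"
  proof (rule integral_mono)
    show "integrable \<mu> (\<lambda>z. \<bar>c (fst z, \<lambda>i. \<gamma> i (snd z i))\<bar>)"
      using cost_int[OF info g] by (rule integrable_abs)
    show "integrable \<mu> (\<lambda>z. B)" by simp
    fix z :: "'x \<times> ('i \<Rightarrow> 'y)"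
    show "\<bar>c (fst z, \<lambda>i. \<gamma> i (snd z i))\<bar> \<le> B"
      using cB[OF policy_in[OF g, of "snd z"], of "fst z"] by simp
  qed
  also have "\<dots> = B" by (simp add: prob_space)
  finally show ?thesis .
qed

lemma pol_ne: "(\<lambda>i (y::'y::topological_space). SOME u. u \<in> U i) \<in> team_policies U"
  unfolding team_policies_def using Une by (simp add: some_in_eq)

lemma value_le:
  fixes \<mu> :: "('x \<times> ('i \<Rightarrow> 'y::polish_space)) measure"
  assumes info: "info_structure \<mu>" and g: "\<gamma> \<in> team_policies U"
  shows "team_value U c \<mu> \<le> team_cost c \<mu> \<gamma>"
  unfolding team_value_def
proof (rule cINF_lower[OF _ g])
  show "bdd_below (team_cost c \<mu> ` team_policies U)"
  proof (rule bdd_belowI2[where m="-B"])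
    fix \<gamma>' :: "'i \<Rightarrow> 'y \<Rightarrow> 'u" assume "\<gamma>' \<in> team_policies U"
    from cost_bound[OF info this] show "- B \<le> team_cost c \<mu> \<gamma>'" by linarith
  qed
qed

lemma value_approx:
  fixes \<mu> :: "('x \<times> ('i \<Rightarrow> 'y::polish_space)) measure"
  assumes info: "info_structure \<mu>" and e: "e > 0"
  shows "\<exists>\<gamma>\<in>team_policies U. team_cost c \<mu> \<gamma> < team_value U c \<mu> + e"
proof (rule ccontr)
  assume "\<not> ?thesis"
  then have h: "\<And>\<gamma>. \<gamma> \<in> team_policies U \<Longrightarrow> team_value U c \<mu> + e \<le> team_cost c \<mu> \<gamma>" by force
  have "team_value U c \<mu> + e \<le> (INF \<gamma>\<in>team_policies U. team_cost c \<mu> \<gamma>)"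
  proof (rule cINF_greatest)
    show "team_policies U \<noteq> {}" using pol_ne by blast
  qed (rule h)
  then have "team_value U c \<mu> + e \<le> team_value U c \<mu>" unfolding team_value_def[of U c \<mu>] .
  then show False using e by simp
qed

lemma stepB:
  fixes \<mu> :: "('x \<times> ('i \<Rightarrow> 'y::polish_space)) measure" and e :: real
  assumes info: "info_structure \<mu>" and g: "\<gamma> \<in> team_policies U" and e: "e > 0"
  shows "\<exists>h. h \<in> team_policies U \<and> (\<forall>i. continuous_on UNIV (h i)) \<and> team_cost c \<mu> h < team_cost c \<mu> \<gamma> + e"
proof -
  interpret prob_space \<mu> using info unfolding info_structure_def by simp
  have s\<mu>: "sets \<mu> = sets borel" using info unfolding info_structure_def by simp
  have fstm: "fst \<in> \<mu> \<rightarrow>\<^sub>M (borel :: 'x measure)"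
    unfolding measurable_cong_sets[OF s\<mu> refl]
    by (rule borel_measurable_continuous_onI[OF continuous_on_fst[OF continuous_on_id]])
  have sndm: "(\<lambda>z. snd z i) \<in> \<mu> \<rightarrow>\<^sub>M (borel :: 'y measure)" for i
    unfolding measurable_cong_sets[OF s\<mu> refl]
  proof (rule borel_measurable_continuous_onI)
    have "continuous_on UNIV (\<lambda>z::'x \<times> ('i \<Rightarrow> 'y). snd z)" by (rule continuous_on_snd[OF continuous_on_id])
    then show "continuous_on UNIV (\<lambda>z::'x \<times> ('i \<Rightarrow> 'y). snd z i)" by (rule continuous_on_product_then_coordinatewise)
  qed
  define \<zeta> where "\<zeta> = distr \<mu> borel fst"
  have f\<zeta>: "finite_measure \<zeta>" unfolding \<zeta>_def
    using prob_space_distr[OF fstm] unfolding prob_space_def by blast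
  have s\<zeta>: "sets \<zeta> = sets borel" unfolding \<zeta>_def by simp
  obtain \<delta> where \<delta>: "\<delta> > 0" "(\<integral>x. omg c (Pi\<^sub>E UNIV U) x \<delta> \<partial>\<zeta>) < e/2"
    "integrable \<zeta> (\<lambda>x. omg c (Pi\<^sub>E UNIV U) x \<delta>)"
    using omg_int_small[OF cm cB PUc PUne cc f\<zeta> s\<zeta>, of "e/2"] e by auto
  define B' where "B' = \<bar>B\<bar> + 1"
  have B': "B' > 0" "B \<le> B'" unfolding B'_def by auto
  define n where "n = real (card (UNIV :: 'i set))"
  have n: "n \<ge> 1" unfolding n_def by (simp add: Suc_leI)
  define \<eta> where "\<eta> = e * \<delta> / (8 * B' * n)"
  have \<eta>: "\<eta> > 0" unfolding \<eta>_def using e \<delta>(1) B'(1) n by simp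
  define \<nu> where "\<nu> i = distr \<mu> borel (\<lambda>z. snd z i)" for i
  have f\<nu>: "finite_measure (\<nu> i)" for i unfolding \<nu>_def
    using prob_space_distr[OF sndm] unfolding prob_space_def by blast
  have s\<nu>: "sets (\<nu> i) = sets borel" for i unfolding \<nu>_def by simp
  have "\<forall>i. \<exists>h. continuous_on UNIV h \<and> (\<forall>y. h y \<in> U i) \<and> (\<integral>y. dist (h y) (\<gamma> i y) \<partial>\<nu> i) < \<eta>"
  proof
    fix i
    show "\<exists>h. continuous_on UNIV h \<and> (\<forall>y. h y \<in> U i) \<and> (\<integral>y. dist (h y) (\<gamma> i y) \<partial>\<nu> i) < \<eta>"
    proof (rule vec_approx[OF f\<nu> s\<nu> cpt cvx Une _ _ \<eta>])
      show "\<gamma> i \<in> borel_measurable borel" by (rule pol_meas[OF g])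
      fix y show "\<gamma> i y \<in> U i" using g unfolding team_policies_def by auto
    qed
  qed
  then obtain h where h: "\<And>i. continuous_on UNIV (h i)" "\<And>i y. h i y \<in> U i"
    "\<And>i. (\<integral>y. dist (h i y) (\<gamma> i y) \<partial>\<nu> i) < \<eta>"
    by metis
  have hpol: "h \<in> team_policies U"
    unfolding team_policies_def using h(1,2) borel_measurable_continuous_onI by blast
  have hm: "h i \<in> borel_measurable borel" for i using h(1) borel_measurable_continuous_onI by blast
  have gmi: "\<gamma> i \<in> borel_measurable borel" for i by (rule pol_meas[OF g])
  have "\<forall>i. \<exists>R. \<forall>u\<in>U i. norm u \<le> R"
    using cpt compact_imp_bounded bounded_iff by metis
  then obtain R where R: "\<And>i u. u \<in> U i \<Longrightarrow> norm u \<le> R i" by metis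
  have gU: "\<gamma> i y \<in> U i" for i y using g unfolding team_policies_def by auto
  have dm: "(\<lambda>y. dist (h i y) (\<gamma> i y)) \<in> borel_measurable borel" for i
    using hm gmi by measurable
  have dbd: "dist (h i y) (\<gamma> i y) \<le> R i + R i" for i y
    using dist_triangle2[of "h i y" "\<gamma> i y" 0] R[OF h(2)[of i y]] R[OF gU[of i y]] by (simp add: dist_norm)
  have dint: "integrable \<mu> (\<lambda>z. dist (h i (snd z i)) (\<gamma> i (snd z i)))" for i
  proof (rule integrable_const_bound[where B="R i + R i"])
    show "AE x in \<mu>. norm (dist (h i (snd x i)) (\<gamma> i (snd x i))) \<le> R i + R i"
      using dbd by (intro AE_I2) simp
    show "(\<lambda>z. dist (h i (snd z i)) (\<gamma> i (snd z i))) \<in> borel_measurable \<mu>"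
      using measurable_comp[OF sndm dm[of i]] by (simp add: comp_def)
  qed
  have dint_eq: "(\<integral>z. dist (h i (snd z i)) (\<gamma> i (snd z i)) \<partial>\<mu>) = (\<integral>y. dist (h i y) (\<gamma> i y) \<partial>\<nu> i)" for i
    unfolding \<nu>_def by (rule integral_distr[OF sndm dm, symmetric])
  have om_meas: "(\<lambda>x. omg c (Pi\<^sub>E UNIV U) x \<delta>) \<in> borel_measurable borel"
    by (rule omg_meas[OF cm cB PUc PUne cc])
  have oint: "integrable \<mu> (\<lambda>z. omg c (Pi\<^sub>E UNIV U) (fst z) \<delta>)"
    using \<delta>(3) unfolding \<zeta>_def integrable_distr_eq[OF fstm om_meas] .
  have oint_eq: "(\<integral>z. omg c (Pi\<^sub>E UNIV U) (fst z) \<delta> \<partial>\<mu>) = (\<integral>x. omg c (Pi\<^sub>E UNIV U) x \<delta> \<partial>\<zeta>)"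
    unfolding \<zeta>_def by (rule integral_distr[OF fstm om_meas, symmetric])
  define W where "W z = omg c (Pi\<^sub>E UNIV U) (fst z) \<delta> + (4 * B' / \<delta>) * (\<Sum>i\<in>UNIV. dist (h i (snd z i)) (\<gamma> i (snd z i)))"
    for z :: "'x \<times> ('i \<Rightarrow> 'y)"
  have Wint: "integrable \<mu> W" unfolding W_def using oint dint by (intro Bochner_Integration.integrable_add integrable_mult_right integrable_sum) auto
  have pw: "\<bar>c (fst z, \<lambda>i. h i (snd z i)) - c (fst z, \<lambda>i. \<gamma> i (snd z i))\<bar> \<le> W z" for z
  proof -
    define u where "u = (\<lambda>i. h i (snd z i))"
    define v where "v = (\<lambda>i. \<gamma> i (snd z i))"
    have u: "u \<in> Pi\<^sub>E UNIV U" unfolding u_def by (rule policy_in[OF hpol])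
    have v: "v \<in> Pi\<^sub>E UNIV U" unfolding v_def by (rule policy_in[OF g])
    have om0: "0 \<le> omg c (Pi\<^sub>E UNIV U) (fst z) \<delta>" by (rule omg_nonneg[OF cm cB PUc PUne cc \<delta>(1)])
    have S0: "0 \<le> (\<Sum>i\<in>UNIV. dist (h i (snd z i)) (\<gamma> i (snd z i)))" by (intro sum_nonneg) auto
    have dfun: "dist u v \<le> 2 * (\<Sum>i\<in>UNIV. dist (h i (snd z i)) (\<gamma> i (snd z i)))"
      using fun_dist_le[of u v] unfolding u_def v_def by simp
    show ?thesis
    proof (cases "dist u v < \<delta>")
      case True
      have "\<bar>c (fst z, u) - c (fst z, v)\<bar> \<le> omg c (Pi\<^sub>E UNIV U) (fst z) \<delta>"
        by (rule omg_bound[OF cm cB PUc PUne cc u v True])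
      moreover have "0 \<le> (4 * B' / \<delta>) * (\<Sum>i\<in>UNIV. dist (h i (snd z i)) (\<gamma> i (snd z i)))"
        using B'(1) \<delta>(1) S0 by simp
      ultimately show ?thesis unfolding W_def u_def v_def by linarith
    next
      case False
      have "\<bar>c (fst z, u) - c (fst z, v)\<bar> \<le> 2 * B'"
        using cB[OF u, of "fst z"] cB[OF v, of "fst z"] B'(2) by linarith
      also have "\<dots> \<le> 2 * B' * (dist u v / \<delta>)"
        using False B'(1) \<delta>(1) by (simp add: field_simps)
      also have "\<dots> \<le> 2 * B' * (2 * (\<Sum>i\<in>UNIV. dist (h i (snd z i)) (\<gamma> i (snd z i))) / \<delta>)"
        using dfun B'(1) \<delta>(1) by (intro mult_left_mono divide_right_mono) auto
      also have "\<dots> = (4 * B' / \<delta>) * (\<Sum>i\<in>UNIV. dist (h i (snd z i)) (\<gamma> i (snd z i)))"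
        by (simp add: field_simps)
      finally show ?thesis unfolding W_def u_def v_def using om0 by linarith
    qed
  qed
  have ih: "integrable \<mu> (\<lambda>z. c (fst z, \<lambda>i. h i (snd z i)))" by (rule cost_int[OF info hpol])
  have ig: "integrable \<mu> (\<lambda>z. c (fst z, \<lambda>i. \<gamma> i (snd z i)))" by (rule cost_int[OF info g])
  have "team_cost c \<mu> h - team_cost c \<mu> \<gamma> = (\<integral>z. c (fst z, \<lambda>i. h i (snd z i)) - c (fst z, \<lambda>i. \<gamma> i (snd z i)) \<partial>\<mu>)"
    unfolding team_cost_def by (rule Bochner_Integration.integral_diff[OF ih ig, symmetric])
  also have "\<dots> \<le> (\<integral>z. W z \<partial>\<mu>)"
  proof (rule integral_mono[OF Bochner_Integration.integrable_diff[OF ih ig] Wint])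
    fix z show "c (fst z, \<lambda>i. h i (snd z i)) - c (fst z, \<lambda>i. \<gamma> i (snd z i)) \<le> W z"
      using pw[of z] by linarith
  qed
  also have "(\<integral>z. W z \<partial>\<mu>) = (\<integral>z. omg c (Pi\<^sub>E UNIV U) (fst z) \<delta> \<partial>\<mu>) +
      (4 * B' / \<delta>) * (\<Sum>i\<in>UNIV. (\<integral>z. dist (h i (snd z i)) (\<gamma> i (snd z i)) \<partial>\<mu>))"
    unfolding W_def using oint dint
    by (simp add: Bochner_Integration.integral_add integrable_mult_right integrable_sum integral_sum)
  also have "\<dots> = (\<integral>x. omg c (Pi\<^sub>E UNIV U) x \<delta> \<partial>\<zeta>) + (4 * B' / \<delta>) * (\<Sum>i\<in>UNIV. (\<integral>y. dist (h i y) (\<gamma> i y) \<partial>\<nu> i))"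
    unfolding oint_eq dint_eq ..
  also have "(4 * B' / \<delta>) * (\<Sum>i\<in>UNIV. (\<integral>y. dist (h i y) (\<gamma> i y) \<partial>\<nu> i)) \<le> (4 * B' / \<delta>) * (\<Sum>i\<in>(UNIV::'i set). \<eta>)"
    using h(3) B'(1) \<delta>(1) by (intro mult_left_mono sum_mono) (auto intro: less_imp_le)
  also have "(4 * B' / \<delta>) * (\<Sum>i\<in>(UNIV::'i set). \<eta>) = e/2"
    unfolding \<eta>_def using n B'(1) \<delta>(1) by (simp add: n_def[symmetric] field_simps)
  finally have "team_cost c \<mu> h - team_cost c \<mu> \<gamma> < e/2 + e/2" using \<delta>(2) by linarith
  then show ?thesis using hpol h(1) by (intro exI[of _ h]) auto
qed

lemma Gcont:
  fixes h :: "'i \<Rightarrow> 'y::topological_space \<Rightarrow> 'u"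
  assumes hc: "\<And>i. continuous_on UNIV (h i)"
  shows "continuous_on UNIV (\<lambda>y::'i \<Rightarrow> 'y. \<lambda>i. h i (y i))"
proof (rule continuous_on_coordinatewise_then_product)
  fix i
  show "continuous_on UNIV (\<lambda>y::'i \<Rightarrow> 'y. h i (y i))"
    by (rule continuous_on_compose2[OF hc continuous_on_product_coordinates]) auto
qed

lemma caseB_conv:
  fixes \<mu>s :: "nat \<Rightarrow> ('x \<times> ('i \<Rightarrow> 'y::polish_space)) measure" and \<mu>
  assumes conv: "weak_conv_seq \<mu>s \<mu>"
    and cj: "continuous_on (UNIV \<times> Pi\<^sub>E UNIV U) c"
    and hp: "h \<in> team_policies U" and hc: "\<And>i. continuous_on UNIV (h i)"
  shows "(\<lambda>m. team_cost c (\<mu>s m) h) \<longlonglongrightarrow> team_cost c \<mu> h"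
proof -
  define f where "f z = c (fst z, \<lambda>i. h i (snd z i))" for z :: "'x \<times> ('i \<Rightarrow> 'y)"
  have pc: "continuous_on UNIV (\<lambda>z::'x \<times> ('i \<Rightarrow> 'y). (fst z, \<lambda>i. h i (snd z i)))"
    by (rule continuous_on_Pair[OF continuous_on_fst[OF continuous_on_id] cont_snd_comp[OF Gcont[OF hc]]])
  have fc: "continuous_on UNIV f" unfolding f_def
    by (rule continuous_on_compose2[OF cj pc]) (use policy_in[OF hp] in auto)
  have fb: "bounded (range f)" unfolding bounded_iff
  proof (intro exI ballI)
    fix y assume "y \<in> range f"
    then obtain z where "y = f z" by blast
    then show "norm y \<le> B" unfolding f_def using cB[OF policy_in[OF hp, of "snd z"], of "fst z"] by simp
  qed
  show ?thesis using conv fc fb unfolding weak_conv_seq_def team_cost_def f_def by blast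
qed

lemma caseA_conv:
  fixes \<mu>s :: "nat \<Rightarrow> ('x \<times> ('i \<Rightarrow> 'y::polish_space)) measure" and \<mu>
  assumes info_m: "\<And>m. info_structure (\<mu>s m)" and info: "info_structure \<mu>"
    and pr: "\<And>m. prior (\<mu>s m) = prior \<mu>" and conv: "weak_conv_seq \<mu>s \<mu>"
    and hp: "h \<in> team_policies U" and hc: "\<And>i. continuous_on UNIV (h i)"
  shows "(\<lambda>m. team_cost c (\<mu>s m) h) \<longlonglongrightarrow> team_cost c \<mu> h"
proof (rule LIMSEQ_I)
  fix e :: real assume e: "e > 0"
  note pf = prior_facts[OF info]
  obtain \<delta> where \<delta>: "\<delta> > 0" "(\<integral>x. omg c (Pi\<^sub>E UNIV U) x \<delta> \<partial>prior \<mu>) < e/3"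
    "integrable (prior \<mu>) (\<lambda>x. omg c (Pi\<^sub>E UNIV U) x \<delta>)"
    using omg_int_small[OF cm cB PUc PUne cc pf(2) pf(3), of "e/3"] e by auto
  obtain N where N: "N \<subseteq> Pi\<^sub>E UNIV U" "finite N" "Pi\<^sub>E UNIV U \<subseteq> (\<Union>w\<in>N. ball w \<delta>)"
  proof (rule compactE_image[OF PUc, of "Pi\<^sub>E UNIV U" "\<lambda>w. ball w \<delta>"])
    show "Pi\<^sub>E UNIV U \<subseteq> (\<Union>w\<in>Pi\<^sub>E UNIV U. ball w \<delta>)" using \<delta>(1) by force
  qed auto
  define \<psi> where "\<psi> w u = max 0 (\<delta> - dist u w)" for w u :: "'i \<Rightarrow> 'u"
  define S where "S u = (\<Sum>w\<in>N. \<psi> w u)" for u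
  have \<psi>0: "0 \<le> \<psi> w u" for w u unfolding \<psi>_def by simp
  have Spos: "S u > 0" if u: "u \<in> Pi\<^sub>E UNIV U" for u
  proof -
    obtain w where w: "w \<in> N" "dist w u < \<delta>" using N(3) u by force
    have "0 < \<psi> w u" unfolding \<psi>_def using w(2) by (simp add: dist_commute)
    then show ?thesis unfolding S_def using N(2) w(1) \<psi>0 by (intro sum_pos2) auto
  qed
  define G where "G y = (\<lambda>i. h i (y i))" for y :: "'i \<Rightarrow> 'y"
  have GU: "G y \<in> Pi\<^sub>E UNIV U" for y unfolding G_def by (rule policy_in[OF hp])
  have Gc: "continuous_on UNIV G" unfolding G_def by (rule Gcont[OF hc])
  define bw where "bw w y = \<psi> w (G y) / S (G y)" for w y
  have bwc: "continuous_on UNIV (bw w)" for w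
  proof -
    have c1: "continuous_on UNIV (\<lambda>y. \<psi> w (G y))" unfolding \<psi>_def
      by (intro continuous_intros Gc)
    have c2: "continuous_on UNIV (\<lambda>y. S (G y))" unfolding S_def \<psi>_def
      by (intro continuous_intros Gc)
    have "\<forall>y\<in>UNIV. S (G y) \<noteq> 0" using Spos[OF GU] by (metis less_irrefl)
    then show ?thesis unfolding bw_def by (rule continuous_on_divide[OF c1 c2])
  qed
  have bw0: "0 \<le> bw w y" for w y unfolding bw_def using \<psi>0 Spos[OF GU, of y] by simp
  have bw1: "\<bar>bw w y\<bar> \<le> 1" if w: "w \<in> N" for w y
  proof -
    have "\<psi> w (G y) \<le> S (G y)" unfolding S_def using N(2) w \<psi>0 by (intro member_le_sum) auto
    then show ?thesis unfolding bw_def using \<psi>0[of w "G y"] Spos[OF GU, of y] by simp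
  qed
  have bwsum: "(\<Sum>w\<in>N. bw w y) = 1" for y
    unfolding bw_def using Spos[OF GU, of y] by (simp add: sum_divide_distrib[symmetric] S_def)
  have am: "(\<lambda>x. c (x, w)) \<in> borel_measurable borel" for w
  proof -
    have "(\<lambda>x::'x. (x, w)) \<in> borel_measurable borel"
      by (intro borel_measurable_continuous_onI continuous_intros)
    from measurable_comp[OF this cm] show ?thesis by (simp add: comp_def)
  qed
  define F where "F z = (\<Sum>w\<in>N. c (fst z, w) * bw w (snd z))" for z :: "'x \<times> ('i \<Rightarrow> 'y)"
  have pw: "\<bar>c (fst z, \<lambda>i. h i (snd z i)) - F z\<bar> \<le> omg c (Pi\<^sub>E UNIV U) (fst z) \<delta>" for z
  proof -
    define x where "x = fst z"
    define y where "y = snd z"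
    have eq1: "c (x, G y) = (\<Sum>w\<in>N. c (x, G y) * bw w y)"
      using bwsum[of y] by (simp add: sum_distrib_left[symmetric])
    have "c (x, G y) - F z = (\<Sum>w\<in>N. (c (x, G y) - c (x, w)) * bw w y)"
      unfolding F_def x_def[symmetric] y_def[symmetric]
      by (subst eq1) (simp add: sum_subtractf[symmetric] left_diff_distrib)
    also have "\<bar>\<dots>\<bar> \<le> (\<Sum>w\<in>N. \<bar>(c (x, G y) - c (x, w)) * bw w y\<bar>)" by (rule sum_abs)
    also have "\<dots> \<le> (\<Sum>w\<in>N. omg c (Pi\<^sub>E UNIV U) x \<delta> * bw w y)"
    proof (rule sum_mono)
      fix w assume w: "w \<in> N"
      show "\<bar>(c (x, G y) - c (x, w)) * bw w y\<bar> \<le> omg c (Pi\<^sub>E UNIV U) x \<delta> * bw w y"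
      proof (cases "bw w y = 0")
        case True then show ?thesis by simp
      next
        case False
        then have "\<psi> w (G y) \<noteq> 0" unfolding bw_def by auto
        then have "dist (G y) w < \<delta>" unfolding \<psi>_def by (auto simp: max_def split: if_splits)
        then have "\<bar>c (x, G y) - c (x, w)\<bar> \<le> omg c (Pi\<^sub>E UNIV U) x \<delta>"
          using omg_bound[OF cm cB PUc PUne cc GU[of y]] N(1) w by blast
        then show ?thesis using bw0[of w y] by (simp add: abs_mult mult_right_mono)
      qed
    qed
    also have "\<dots> = omg c (Pi\<^sub>E UNIV U) x \<delta>" by (simp add: sum_distrib_left[symmetric] bwsum)
    finally show ?thesis unfolding x_def y_def G_def by simp
  qed
  have Fint: "integrable M (\<lambda>z. c (fst z, w) * bw w (snd z))" if M: "info_structure M" and w: "w \<in> N"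
    for M :: "('x \<times> ('i \<Rightarrow> 'y)) measure" and w
  proof -
    note pM = prior_facts[OF M]
    have fM: "finite_measure M" using M unfolding info_structure_def prob_space_def by blast
    have m1: "(\<lambda>z. c (fst z, w)) \<in> borel_measurable M" using measurable_comp[OF pM(1) am[of w]] by (simp add: comp_def)
    have m2: "(\<lambda>z. bw w (snd z)) \<in> borel_measurable M"
      using measurable_comp[OF pM(4) borel_measurable_continuous_onI[OF bwc[of w]]] by (simp add: comp_def)
    have bnd: "norm (c (fst z, w) * bw w (snd z)) \<le> B" for z
    proof -
      have a: "\<bar>c (fst z, w)\<bar> \<le> B" using cB[of w "fst z"] N(1) w by blast
      have "\<bar>c (fst z, w)\<bar> * \<bar>bw w (snd z)\<bar> \<le> B * 1"
        by (rule mult_mono[OF a bw1[OF w]]) (use a in auto)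
      then show ?thesis by (simp add: abs_mult)
    qed
    show ?thesis
    proof (rule finite_measure.integrable_const_bound[OF fM])
      show "AE x in M. norm (c (fst x, w) * bw w (snd x)) \<le> B" using bnd by (intro AE_I2) simp
      show "(\<lambda>z. c (fst z, w) * bw w (snd z)) \<in> borel_measurable M" by (rule borel_measurable_times[OF m1 m2])
    qed
  qed
  have close: "\<bar>team_cost c M h - (\<integral>z. F z \<partial>M)\<bar> < e/3"
    if M: "info_structure M" "prior M = prior \<mu>" for M :: "('x \<times> ('i \<Rightarrow> 'y)) measure"
  proof -
    note pM = prior_facts[OF M(1)]
    have om: "(\<lambda>x. omg c (Pi\<^sub>E UNIV U) x \<delta>) \<in> borel_measurable borel"
      by (rule omg_meas[OF cm cB PUc PUne cc])
    have i1: "integrable (prior M) (\<lambda>x. omg c (Pi\<^sub>E UNIV U) x \<delta>)" using \<delta>(3) M(2) by simp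
    have oi: "integrable M (\<lambda>z. omg c (Pi\<^sub>E UNIV U) (fst z) \<delta>)"
      using i1 unfolding prior_def integrable_distr_eq[OF pM(1) om] .
    have oe0: "(\<integral>z. omg c (Pi\<^sub>E UNIV U) (fst z) \<delta> \<partial>M) = (\<integral>x. omg c (Pi\<^sub>E UNIV U) x \<delta> \<partial>prior M)"
      unfolding prior_def by (rule integral_distr[OF pM(1) om, symmetric])
    have oe: "(\<integral>z. omg c (Pi\<^sub>E UNIV U) (fst z) \<delta> \<partial>M) = (\<integral>x. omg c (Pi\<^sub>E UNIV U) x \<delta> \<partial>prior \<mu>)"
      using oe0 M(2) by simp
    have ci: "integrable M (\<lambda>z. c (fst z, \<lambda>i. h i (snd z i)))" by (rule cost_int[OF M(1) hp])
    have fi: "integrable M F" unfolding F_def by (rule Bochner_Integration.integrable_sum) (rule Fint[OF M(1)])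
    have "\<bar>team_cost c M h - (\<integral>z. F z \<partial>M)\<bar> = \<bar>\<integral>z. c (fst z, \<lambda>i. h i (snd z i)) - F z \<partial>M\<bar>"
      unfolding team_cost_def by (simp add: Bochner_Integration.integral_diff[OF ci fi])
    also have "\<dots> \<le> (\<integral>z. \<bar>c (fst z, \<lambda>i. h i (snd z i)) - F z\<bar> \<partial>M)"
      using integral_norm_bound[of M "\<lambda>z. c (fst z, \<lambda>i. h i (snd z i)) - F z"] by simp
    also have "\<dots> \<le> (\<integral>z. omg c (Pi\<^sub>E UNIV U) (fst z) \<delta> \<partial>M)"
      by (rule integral_mono[OF integrable_abs[OF Bochner_Integration.integrable_diff[OF ci fi]] oi pw])
    also have "\<dots> < e/3" using oe \<delta>(2) by simp
    finally show ?thesis .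
  qed
  have lims: "(\<lambda>m. \<integral>z. c (fst z, w) * bw w (snd z) \<partial>\<mu>s m) \<longlonglongrightarrow> (\<integral>z. c (fst z, w) * bw w (snd z) \<partial>\<mu>)"
    if w: "w \<in> N" for w
  proof (rule prod_conv[OF info_m info pr conv am _ bwc bw1[OF w]])
    fix x show "\<bar>c (x, w)\<bar> \<le> B" using cB[of w x] N(1) w by blast
  qed
  have Feq: "(\<integral>z. F z \<partial>M) = (\<Sum>w\<in>N. \<integral>z. c (fst z, w) * bw w (snd z) \<partial>M)" if M: "info_structure M"
    for M :: "('x \<times> ('i \<Rightarrow> 'y)) measure"
    unfolding F_def by (rule Bochner_Integration.integral_sum) (rule Fint[OF M])
  have "(\<lambda>m. \<Sum>w\<in>N. \<integral>z. c (fst z, w) * bw w (snd z) \<partial>\<mu>s m) \<longlonglongrightarrow> (\<Sum>w\<in>N. \<integral>z. c (fst z, w) * bw w (snd z) \<partial>\<mu>)"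
    by (rule tendsto_sum) (rule lims)
  then have limF: "(\<lambda>m. \<integral>z. F z \<partial>\<mu>s m) \<longlonglongrightarrow> (\<integral>z. F z \<partial>\<mu>)"
    using Feq[OF info_m] Feq[OF info] by simp
  obtain N0 where N0: "\<And>m. m \<ge> N0 \<Longrightarrow> norm ((\<integral>z. F z \<partial>\<mu>s m) - (\<integral>z. F z \<partial>\<mu>)) < e/3"
    using LIMSEQ_D[OF limF, of "e/3"] e by auto
  show "\<exists>no. \<forall>m\<ge>no. norm (team_cost c (\<mu>s m) h - team_cost c \<mu> h) < e"
  proof (intro exI allI impI)
    fix m assume m: "N0 \<le> m"
    have c1: "\<bar>team_cost c (\<mu>s m) h - (\<integral>z. F z \<partial>\<mu>s m)\<bar> < e/3" by (rule close[OF info_m pr])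
    have c2: "\<bar>team_cost c \<mu> h - (\<integral>z. F z \<partial>\<mu>)\<bar> < e/3" by (rule close[OF info refl])
    have c3: "\<bar>(\<integral>z. F z \<partial>\<mu>s m) - (\<integral>z. F z \<partial>\<mu>)\<bar> < e/3" using N0[OF m] by simp
    show "norm (team_cost c (\<mu>s m) h - team_cost c \<mu> h) < e"
      unfolding real_norm_def using c1 c2 c3 by linarith
  qed
qed

end


theorem theorem4p3:
  fixes U :: "'i::finite \<Rightarrow> 'u::euclidean_space set"
    and c :: "'x::polish_space \<times> ('i \<Rightarrow> 'u) \<Rightarrow> real"
    and \<mu>s :: "nat \<Rightarrow> ('x \<times> ('i \<Rightarrow> 'y::polish_space)) measure"
    and \<mu> :: "('x \<times> ('i \<Rightarrow> 'y)) measure"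
  assumes A1_meas: "c \<in> borel_measurable borel"
    and A1_bdd: "\<exists>B. \<forall>x. \<forall>u\<in>(\<Pi>\<^sub>E i\<in>UNIV. U i). \<bar>c (x, u)\<bar> \<le> B"
    and A4: "\<And>i. compact (U i)"
    and U_ne: "\<And>i. U i \<noteq> {}"
    and A5: "\<And>x. continuous_on (\<Pi>\<^sub>E i\<in>UNIV. U i) (\<lambda>u. c (x, u))"
    and A7: "\<And>i. convex (U i)"
    and info_m: "\<And>m. info_structure (\<mu>s m)"
    and info: "info_structure \<mu>"
    and A3_m: "\<And>m. assumption_A3 (\<mu>s m)"
    and A3: "assumption_A3 \<mu>"
    and conv: "weak_conv_seq \<mu>s \<mu>"
    and case_ab: "(\<forall>m. prior (\<mu>s m) = prior \<mu>) \<or> continuous_on (UNIV \<times> (\<Pi>\<^sub>E i\<in>UNIV. U i)) c"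
  shows "limsup (\<lambda>m. ereal (team_value U c (\<mu>s m))) \<le> ereal (team_value U c \<mu>)"
proof (rule ereal_le_epsilon2)
  obtain B where B: "\<forall>x. \<forall>u\<in>(\<Pi>\<^sub>E i\<in>UNIV. U i). \<bar>c (x, u)\<bar> \<le> B" using A1_bdd by blast
  have cB: "\<And>x u. u \<in> Pi\<^sub>E UNIV U \<Longrightarrow> \<bar>c (x, u)\<bar> \<le> B" using B by blast
  fix e :: real assume e: "0 < e"
  obtain \<gamma> where g: "\<gamma> \<in> team_policies U" "team_cost c \<mu> \<gamma> < team_value U c \<mu> + e/2"
    using value_approx[OF A1_meas cB A4 U_ne A5 A7 info, of "e/2"] e by auto
  obtain h where h: "h \<in> team_policies U" "\<And>i. continuous_on UNIV (h i)"
    "team_cost c \<mu> h < team_cost c \<mu> \<gamma> + e/2"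
    using stepB[OF A1_meas cB A4 U_ne A5 A7 info g(1), of "e/2"] e by auto
  have lim: "(\<lambda>m. team_cost c (\<mu>s m) h) \<longlonglongrightarrow> team_cost c \<mu> h"
  proof (cases "\<forall>m. prior (\<mu>s m) = prior \<mu>")
    case True
    then have pr: "\<And>m. prior (\<mu>s m) = prior \<mu>" by blast
    show ?thesis by (rule caseA_conv[OF A1_meas cB A4 U_ne A5 A7 info_m info pr conv h(1) h(2)])
  next
    case False
    then have cj: "continuous_on (UNIV \<times> (\<Pi>\<^sub>E i\<in>UNIV. U i)) c" using case_ab by blast
    show ?thesis by (rule caseB_conv[OF A1_meas cB A4 U_ne A5 A7 conv cj h(1) h(2)])
  qed
  have "limsup (\<lambda>m. ereal (team_value U c (\<mu>s m))) \<le> limsup (\<lambda>m. ereal (team_cost c (\<mu>s m) h))"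
    using value_le[OF A1_meas cB A4 U_ne A5 A7 info_m h(1)]
    by (intro Limsup_mono) simp
  also have "\<dots> = ereal (team_cost c \<mu> h)"
    by (intro lim_imp_Limsup) (simp_all add: lim)
  also have "\<dots> \<le> ereal (team_value U c \<mu>) + ereal e" using g(2) h(3) by simp
  finally show "limsup (\<lambda>m. ereal (team_value U c (\<mu>s m))) \<le> ereal (team_value U c \<mu>) + ereal e" .
qed


end
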